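(* Let $K=\bigoplus_{p,q\ge0}K^{pq}$ be a double complex of Abelian topological groups with continuous differentials $d':K^{pq}\to K^{p+1,q}$, $d'':K^{pq}\to K^{p,q+1}$ satisfying $(d'+d'')^2=0$. Suppose that $d'':K^{pq}\to Z^{p,q+1}_{II}(K)$ is open for all $p,q\ge0$. Then the zero homomorphism $0^\bullet\to K^\bullet/K_I^\bullet$, and hence the inclusion $K_I^\bullet\to K^\bullet$, are quasi-open. In particular $H^n(K_I^\bullet)\to H^n(K^\bullet)$ is open for $n\ge0$.
   Context: $K^\bullet$ is the total complex: $K^n=\bigoplus_{p+q=n}K^{pq}$ (product topology; $K^n=0$ for $n<0$) with differential $d=d'+d''$. $Z^{pq}_{II}(K)=\ker(d''|K^{pq})$ with the subspace topology. $K_I$ is the subcomplex with $K_I^{pq}=0$ for $q>0$ and $K_I^{p0}=Z^{p0}_{II}(K)$, so $K_I^n=K_I^{n0}$ with differential $d'$. Cohomology groups carry the quotient topologies of cycles (subspace topology) by boundaries; $K^\bullet/K_I^\bullet$ has the quotient topology. For a homomorphism $\varphi:A^\bullet\to B^\bullet$ of complexes of Abelian topological groups, $\varphi$ is quasi-open if for every $n$ the map $\ker(d_A|A^n)\oplus B^{n-1}\to\ker(d_B|B^n)$, $(a,b)\mapsto\varphi a-d_Bb$, is open. *)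

theory Defs
  imports "HOL-Analysis.Analysis"
begin

text \<open>A complex: in each degree n a topological space (whose point set is the group A^n),
  the group operations of degree n, and the differential d : A^n \<rightarrow> A^(n+1).\<close>

record 'x tcomplex =
  ctop  :: "int \<Rightarrow> 'x topology"
  czero :: "int \<Rightarrow> 'x"
  cadd  :: "int \<Rightarrow> 'x \<Rightarrow> 'x \<Rightarrow> 'x"
  cneg  :: "int \<Rightarrow> 'x \<Rightarrow> 'x"
  cdiff :: "int \<Rightarrow> 'x \<Rightarrow> 'x"

definition quotient_topology :: "'x topology \<Rightarrow> ('x \<Rightarrow> 'c) \<Rightarrow> 'c topology" where
  "quotient_topology X q =
     topology (\<lambda>U. U \<subseteq> q ` topspace X \<and> openin X {x \<in> topspace X. q x \<in> U})"

definition cycles :: "'x tcomplex \<Rightarrow> int \<Rightarrow> 'x set" where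
  "cycles A n = {x \<in> topspace (ctop A n). cdiff A n x = czero A (n+1)}"

definition cycles_top :: "'x tcomplex \<Rightarrow> int \<Rightarrow> 'x topology" where
  "cycles_top A n = subtopology (ctop A n) (cycles A n)"

definition boundaries :: "'x tcomplex \<Rightarrow> int \<Rightarrow> 'x set" where
  "boundaries A n = cdiff A (n-1) ` topspace (ctop A (n-1))"

definition hclass :: "'x tcomplex \<Rightarrow> int \<Rightarrow> 'x \<Rightarrow> 'x set" where
  "hclass A n x = {y \<in> cycles A n. cadd A n y (cneg A n x) \<in> boundaries A n}"

definition coh_top :: "'x tcomplex \<Rightarrow> int \<Rightarrow> 'x set topology" where
  "coh_top A n = quotient_topology (cycles_top A n) (hclass A n)"

definition coh_map :: "'y tcomplex \<Rightarrow> (int \<Rightarrow> 'x \<Rightarrow> 'y) \<Rightarrow> int \<Rightarrow> 'x set \<Rightarrow> 'y set" where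
  "coh_map B phi n c = hclass B n (phi n (SOME x. x \<in> c))"

definition quasi_open :: "'x tcomplex \<Rightarrow> 'y tcomplex \<Rightarrow> (int \<Rightarrow> 'x \<Rightarrow> 'y) \<Rightarrow> bool" where
  "quasi_open A B phi \<longleftrightarrow>
     (\<forall>n. open_map (prod_topology (cycles_top A n) (ctop B (n-1))) (cycles_top B n)
            (\<lambda>(a,b). cadd B n (phi n a) (cneg B n (cdiff B (n-1) b))))"

definition zero_complex :: "unit tcomplex" where
  "zero_complex = \<lparr>ctop = (\<lambda>n. discrete_topology {()}), czero = (\<lambda>n. ()),
     cadd = (\<lambda>n x y. ()), cneg = (\<lambda>n x. ()), cdiff = (\<lambda>n x. ())\<rparr>"

definition qcoset :: "'x tcomplex \<Rightarrow> (int \<Rightarrow> 'x set) \<Rightarrow> int \<Rightarrow> 'x \<Rightarrow> 'x set" where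
  "qcoset A S n x = {y \<in> topspace (ctop A n). cadd A n y (cneg A n x) \<in> S n}"

definition quotient_complex :: "'x tcomplex \<Rightarrow> (int \<Rightarrow> 'x set) \<Rightarrow> 'x set tcomplex" where
  "quotient_complex A S =
    \<lparr>ctop = (\<lambda>n. quotient_topology (ctop A n) (qcoset A S n)),
     czero = (\<lambda>n. qcoset A S n (czero A n)),
     cadd = (\<lambda>n c1 c2. qcoset A S n (cadd A n (SOME x. x \<in> c1) (SOME x. x \<in> c2))),
     cneg = (\<lambda>n c. qcoset A S n (cneg A n (SOME x. x \<in> c))),
     cdiff = (\<lambda>n c. qcoset A S (n+1) (cdiff A n (SOME x. x \<in> c)))\<rparr>"

text \<open>K^{pq} is the topological space T p q (carrier = topspace), a subgroup of the ambient
  abelian group 'a; d' p q : K^{pq} \<rightarrow> K^{p+1,q}, d'' p q : K^{pq} \<rightarrow> K^{p,q+1}.\<close>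

definition double_complex ::
  "(nat \<Rightarrow> nat \<Rightarrow> 'a::ab_group_add topology) \<Rightarrow> (nat \<Rightarrow> nat \<Rightarrow> 'a \<Rightarrow> 'a) \<Rightarrow> (nat \<Rightarrow> nat \<Rightarrow> 'a \<Rightarrow> 'a) \<Rightarrow> bool"
where
  "double_complex T d' d'' \<longleftrightarrow>
    (\<forall>p q. 0 \<in> topspace (T p q)
       \<and> (\<forall>x\<in>topspace (T p q). \<forall>y\<in>topspace (T p q). x + y \<in> topspace (T p q))
       \<and> (\<forall>x\<in>topspace (T p q). - x \<in> topspace (T p q))
       \<and> continuous_map (prod_topology (T p q) (T p q)) (T p q) (\<lambda>(x,y). x + y)
       \<and> continuous_map (T p q) (T p q) uminus
       \<and> continuous_map (T p q) (T (Suc p) q) (d' p q)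
       \<and> continuous_map (T p q) (T p (Suc q)) (d'' p q)
       \<and> (\<forall>x\<in>topspace (T p q). \<forall>y\<in>topspace (T p q). d' p q (x + y) = d' p q x + d' p q y)
       \<and> (\<forall>x\<in>topspace (T p q). \<forall>y\<in>topspace (T p q). d'' p q (x + y) = d'' p q x + d'' p q y)
       \<and> (\<forall>x\<in>topspace (T p q). d' (Suc p) q (d' p q x) = 0)
       \<and> (\<forall>x\<in>topspace (T p q). d'' p (Suc q) (d'' p q x) = 0)
       \<and> (\<forall>x\<in>topspace (T p q). d' p (Suc q) (d'' p q x) + d'' (Suc p) q (d' p q x) = 0))"

definition ZII :: "(nat \<Rightarrow> nat \<Rightarrow> 'a::ab_group_add topology) \<Rightarrow> (nat \<Rightarrow> nat \<Rightarrow> 'a \<Rightarrow> 'a) \<Rightarrow> nat \<Rightarrow> nat \<Rightarrow> 'a set" where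
  "ZII T d'' p q = {x \<in> topspace (T p q). d'' p q x = 0}"

text \<open>Total complex: an element of K^n is a function p \<mapsto> its component in K^{p,n-p}
  (zero for p > n; everything zero for n < 0); product topology.\<close>
definition total_complex ::
  "(nat \<Rightarrow> nat \<Rightarrow> 'a::ab_group_add topology) \<Rightarrow> (nat \<Rightarrow> nat \<Rightarrow> 'a \<Rightarrow> 'a) \<Rightarrow> (nat \<Rightarrow> nat \<Rightarrow> 'a \<Rightarrow> 'a)
   \<Rightarrow> (nat \<Rightarrow> 'a) tcomplex"
where
  "total_complex T d' d'' =
    \<lparr>ctop = (\<lambda>n. product_topology
                  (\<lambda>p. if int p \<le> n then T p (nat (n - int p)) else discrete_topology {0}) UNIV),
     czero = (\<lambda>n. (\<lambda>p. 0)),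
     cadd = (\<lambda>n f g. (\<lambda>p. f p + g p)),
     cneg = (\<lambda>n f. (\<lambda>p. - f p)),
     cdiff = (\<lambda>n f. (\<lambda>p. if int p \<le> n + 1 then
                (if 1 \<le> p then d' (p - 1) (nat (n + 1 - int p)) (f (p - 1)) else 0)
              + (if int p \<le> n then d'' p (nat (n - int p)) (f p) else 0)
              else 0))\<rparr>"

text \<open>K_I^n = K_I^{n0} = Z^{n0}_{II}(K), viewed inside K^n (subspace topology).\<close>
definition KI_set ::
  "(nat \<Rightarrow> nat \<Rightarrow> 'a::ab_group_add topology) \<Rightarrow> (nat \<Rightarrow> nat \<Rightarrow> 'a \<Rightarrow> 'a) \<Rightarrow> (nat \<Rightarrow> nat \<Rightarrow> 'a \<Rightarrow> 'a)
   \<Rightarrow> int \<Rightarrow> (nat \<Rightarrow> 'a) set"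
where
  "KI_set T d' d'' n =
     {f \<in> topspace (ctop (total_complex T d' d'') n).
        (\<forall>p. int p \<noteq> n \<longrightarrow> f p = 0) \<and> (0 \<le> n \<longrightarrow> f (nat n) \<in> ZII T d'' (nat n) 0)}"

definition KI_complex ::
  "(nat \<Rightarrow> nat \<Rightarrow> 'a::ab_group_add topology) \<Rightarrow> (nat \<Rightarrow> nat \<Rightarrow> 'a \<Rightarrow> 'a) \<Rightarrow> (nat \<Rightarrow> nat \<Rightarrow> 'a \<Rightarrow> 'a)
   \<Rightarrow> (nat \<Rightarrow> 'a) tcomplex"
where
  "KI_complex T d' d'' =
     (total_complex T d' d'')\<lparr>ctop := (\<lambda>n. subtopology (ctop (total_complex T d' d'') n) (KI_set T d' d'' n))\<rparr>"

end

theory Submission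
  imports Defs
begin


definition tgrp :: "'a::ab_group_add topology \<Rightarrow> bool" where
  "tgrp X \<longleftrightarrow> 0 \<in> topspace X \<and> (\<forall>x\<in>topspace X. \<forall>y\<in>topspace X. x + y \<in> topspace X)
     \<and> (\<forall>x\<in>topspace X. - x \<in> topspace X)
     \<and> continuous_map (prod_topology X X) X (\<lambda>(x,y). x + y) \<and> continuous_map X X uminus"

lemma tgrp_discrete0: "tgrp (discrete_topology {0})"
proof -
  have a: "continuous_map (prod_topology (discrete_topology {0}) (discrete_topology {0})) (discrete_topology {0::'a}) (\<lambda>z. 0)"
    by (simp add: continuous_map_const)
  have b: "continuous_map (discrete_topology {0}) (discrete_topology {0::'a}) (\<lambda>z. 0)"
    by (simp add: continuous_map_const)
  show ?thesis unfolding tgrp_def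
    by (auto intro: continuous_map_eq[OF a] continuous_map_eq[OF b])
qed

lemma tgrpD:
  assumes "tgrp X"
  shows "0 \<in> topspace X" "x \<in> topspace X \<Longrightarrow> y \<in> topspace X \<Longrightarrow> x + y \<in> topspace X"
    "x \<in> topspace X \<Longrightarrow> - x \<in> topspace X"
    "x \<in> topspace X \<Longrightarrow> y \<in> topspace X \<Longrightarrow> x - y \<in> topspace X"
proof -
  have H: "0 \<in> topspace X" "\<And>x y. x \<in> topspace X \<Longrightarrow> y \<in> topspace X \<Longrightarrow> x + y \<in> topspace X"
    "\<And>x. x \<in> topspace X \<Longrightarrow> - x \<in> topspace X"
    using assms unfolding tgrp_def by blast+
  show "0 \<in> topspace X" by (rule H(1))
  show "x \<in> topspace X \<Longrightarrow> y \<in> topspace X \<Longrightarrow> x + y \<in> topspace X" by (rule H(2))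
  show "x \<in> topspace X \<Longrightarrow> - x \<in> topspace X" by (rule H(3))
  show "x \<in> topspace X \<Longrightarrow> y \<in> topspace X \<Longrightarrow> x - y \<in> topspace X"
    unfolding diff_conv_add_uminus by (rule H(2), assumption, rule H(3))
qed

lemma tgrp_shift:
  assumes "tgrp X" "c \<in> topspace X"
  shows "continuous_map X X (\<lambda>y. y + c)"
proof -
  have "continuous_map X (prod_topology X X) (\<lambda>y. (y, c))"
    using assms by (intro continuous_map_pairedI) auto
  moreover have "continuous_map (prod_topology X X) X (\<lambda>(x,y). x + y)"
    using assms unfolding tgrp_def by auto
  ultimately have "continuous_map X X ((\<lambda>(x,y). x + y) \<circ> (\<lambda>y. (y, c)))"
    by (rule continuous_map_compose)
  then show ?thesis by (simp add: o_def)
qed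

lemma tgrp_rshift:
  assumes "tgrp X" "c \<in> topspace X"
  shows "continuous_map X X (\<lambda>y. c - y)"
proof -
  have "continuous_map X X uminus" using assms unfolding tgrp_def by auto
  from continuous_map_compose[OF this tgrp_shift[OF assms]]
  have "continuous_map X X (\<lambda>y. - y + c)" by (simp add: o_def)
  moreover have "(\<lambda>y. - y + c) = (\<lambda>y. c - y)" by (auto simp: algebra_simps)
  ultimately show ?thesis by simp
qed

lemma tgrp_nbhd_shift:
  assumes "tgrp X" "c \<in> topspace X" "openin X U"
  shows "openin X {y \<in> topspace X. y + c \<in> U}"
  using openin_continuous_map_preimage[OF tgrp_shift[OF assms(1,2)] assms(3)] .

lemma tgrp_nbhd_rshift:
  assumes "tgrp X" "c \<in> topspace X" "openin X U"
  shows "openin X {y \<in> topspace X. c - y \<in> U}"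
  using openin_continuous_map_preimage[OF tgrp_rshift[OF assms(1,2)] assms(3)] .

lemma tgrp_diff_nbhd:
  assumes "tgrp X" "openin X W" "0 \<in> W"
  shows "\<exists>A. openin X A \<and> 0 \<in> A \<and> (\<forall>x\<in>A. \<forall>y\<in>A. x - y \<in> W)"
proof -
  have c1: "continuous_map (prod_topology X X) X (\<lambda>(x,y). x + y)" and c2: "continuous_map X X uminus"
    using assms unfolding tgrp_def by auto
  have "continuous_map (prod_topology X X) (prod_topology X X) (\<lambda>(x,y). (x, - y))"
    by (auto intro!: continuous_map_pairedI continuous_map_fst
        continuous_map_compose[OF continuous_map_snd c2, unfolded o_def] simp: case_prod_unfold)
  from continuous_map_compose[OF this c1]
  have c3: "continuous_map (prod_topology X X) X (\<lambda>(x,y). x - y)"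
    by (simp add: o_def case_prod_unfold)
  have o1: "openin (prod_topology X X) {z \<in> topspace (prod_topology X X). (\<lambda>(x,y). x - y) z \<in> W}"
    by (rule openin_continuous_map_preimage[OF c3 assms(2)])
  have o2: "(0,0) \<in> {z \<in> topspace (prod_topology X X). (\<lambda>(x,y). x - y) z \<in> W}"
    using assms tgrpD(1)[OF assms(1)] by auto
  obtain U V where UV: "openin X U" "openin X V" "0 \<in> U" "0 \<in> V"
    "U \<times> V \<subseteq> {z \<in> topspace (prod_topology X X). (\<lambda>(x,y). x - y) z \<in> W}"
    using o1[unfolded openin_prod_topology_alt, rule_format, OF o2] by blast
  show ?thesis
    by (rule exI[of _ "U \<inter> V"]) (use UV in auto)
qed

locale DC =
  fixes T :: "nat \<Rightarrow> nat \<Rightarrow> 'a::ab_group_add topology"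
    and d' d'' :: "nat \<Rightarrow> nat \<Rightarrow> 'a \<Rightarrow> 'a"
  assumes dc: "double_complex T d' d''"
begin

lemma T_tgrp: "tgrp (T p q)"
  using dc unfolding double_complex_def tgrp_def by blast

lemma d'_cont: "continuous_map (T p q) (T (Suc p) q) (d' p q)"
  and d''_cont: "continuous_map (T p q) (T p (Suc q)) (d'' p q)"
  using dc unfolding double_complex_def by blast+

lemma d'_in: "x \<in> topspace (T p q) \<Longrightarrow> d' p q x \<in> topspace (T (Suc p) q)"
  using continuous_map_image_subset_topspace[OF d'_cont] by blast
lemma d''_in: "x \<in> topspace (T p q) \<Longrightarrow> d'' p q x \<in> topspace (T p (Suc q))"
  using continuous_map_image_subset_topspace[OF d''_cont] by blast

lemma d'_add: "x \<in> topspace (T p q) \<Longrightarrow> y \<in> topspace (T p q) \<Longrightarrow> d' p q (x + y) = d' p q x + d' p q y"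
  and d''_add: "x \<in> topspace (T p q) \<Longrightarrow> y \<in> topspace (T p q) \<Longrightarrow> d'' p q (x + y) = d'' p q x + d'' p q y"
  using dc unfolding double_complex_def by blast+

lemma d'd': "x \<in> topspace (T p q) \<Longrightarrow> d' (Suc p) q (d' p q x) = 0"
  and d''d'': "x \<in> topspace (T p q) \<Longrightarrow> d'' p (Suc q) (d'' p q x) = 0"
  and anti: "x \<in> topspace (T p q) \<Longrightarrow> d' p (Suc q) (d'' p q x) + d'' (Suc p) q (d' p q x) = 0"
  using dc unfolding double_complex_def by blast+

lemma T0: "0 \<in> topspace (T p q)" using tgrpD[OF T_tgrp] by blast
lemma Tadd: "x \<in> topspace (T p q) \<Longrightarrow> y \<in> topspace (T p q) \<Longrightarrow> x + y \<in> topspace (T p q)"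
  using tgrpD[OF T_tgrp] by blast
lemma Tneg: "x \<in> topspace (T p q) \<Longrightarrow> - x \<in> topspace (T p q)"
  using tgrpD[OF T_tgrp] by blast
lemma Tdiff: "x \<in> topspace (T p q) \<Longrightarrow> y \<in> topspace (T p q) \<Longrightarrow> x - y \<in> topspace (T p q)"
  using tgrpD[OF T_tgrp] by blast

lemma d'_0[simp]: "d' p q 0 = 0"
  using d'_add[OF T0 T0, of p q] by simp
lemma d''_0[simp]: "d'' p q 0 = 0"
  using d''_add[OF T0 T0, of p q] by simp
lemma d'_neg: "x \<in> topspace (T p q) \<Longrightarrow> d' p q (- x) = - d' p q x"
proof -
  assume x: "x \<in> topspace (T p q)"
  have "d' p q x + d' p q (- x) = 0" using d'_add[OF x Tneg[OF x]] by simp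
  then show ?thesis by (metis add_eq_0_iff)
qed
lemma d''_neg: "x \<in> topspace (T p q) \<Longrightarrow> d'' p q (- x) = - d'' p q x"
proof -
  assume x: "x \<in> topspace (T p q)"
  have "d'' p q x + d'' p q (- x) = 0" using d''_add[OF x Tneg[OF x]] by simp
  then show ?thesis by (metis add_eq_0_iff)
qed
lemma d'_diff: "x \<in> topspace (T p q) \<Longrightarrow> y \<in> topspace (T p q) \<Longrightarrow> d' p q (x - y) = d' p q x - d' p q y"
  using d'_add[OF _ Tneg, of x p q y] d'_neg[of y p q] by simp
lemma d''_diff: "x \<in> topspace (T p q) \<Longrightarrow> y \<in> topspace (T p q) \<Longrightarrow> d'' p q (x - y) = d'' p q x - d'' p q y"
  using d''_add[OF _ Tneg, of x p q y] d''_neg[of y p q] by simp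

definition zz_hyp :: "nat \<Rightarrow> nat \<Rightarrow> (nat \<Rightarrow> 'a set) \<Rightarrow> 'a set \<Rightarrow> bool" where
  "zz_hyp j m N M \<longleftrightarrow> (\<forall>p. j \<le> p \<and> p < m \<longrightarrow> openin (T p (m - Suc p)) (N p) \<and> 0 \<in> N p)
      \<and> openin (T m 0) M \<and> 0 \<in> M"

definition zz_concl :: "nat \<Rightarrow> nat \<Rightarrow> (nat \<Rightarrow> 'a set) \<Rightarrow> 'a set \<Rightarrow> bool" where
  "zz_concl j m N M \<longleftrightarrow> (\<exists>W. (\<forall>p. j \<le> p \<and> p \<le> m \<longrightarrow> openin (T p (m - p)) (W p) \<and> 0 \<in> W p) \<and>
   (\<forall>x. (\<forall>p. j \<le> p \<and> p \<le> m \<longrightarrow> x p \<in> W p) \<and> d'' j (m-j) (x j) = 0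
        \<and> (\<forall>p. j \<le> p \<and> p < m \<longrightarrow> d' p (m-p) (x p) + d'' (Suc p) (m - Suc p) (x (Suc p)) = 0)
     \<longrightarrow> (\<exists>u. (\<forall>p. j \<le> p \<and> p < m \<longrightarrow> u p \<in> N p)
          \<and> (\<forall>p. j \<le> p \<and> p < m \<longrightarrow> x p = (if p = j then 0 else d' (p-1) (m-p) (u (p-1))) + d'' p (m - Suc p) (u p))
          \<and> x m - (if j = m then 0 else d' (m-1) 0 (u (m-1))) \<in> M
          \<and> d'' m 0 (x m - (if j = m then 0 else d' (m-1) 0 (u (m-1)))) = 0)))"

lemma zigzag_aux:
  assumes d''_open: "\<And>p q. open_map (T p q) (subtopology (T p (Suc q)) (ZII T d'' p (Suc q))) (d'' p q)"
  shows "\<forall>j N M. j \<le> m \<longrightarrow> m - j = k \<longrightarrow> zz_hyp j m N M \<longrightarrow> zz_concl j m N M"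
proof (induction k)
  case 0
  show ?case
  proof (intro allI impI)
    fix j N M assume "j \<le> m" "m - j = 0" and H: "zz_hyp j m N M"
    then have j: "j = m" by simp
    show "zz_concl j m N M"
      unfolding zz_concl_def
      apply (rule exI[of _ "\<lambda>p. M"])
      using H j by (auto simp: zz_hyp_def)
  qed
next
  case (Suc k)
  show ?case
  proof (intro allI impI)
    fix j N M assume jm: "j \<le> m" and mjk: "m - j = Suc k" and H: "zz_hyp j m N M"
    define a where "a = Suc j"
    have jm': "j < m" using mjk by simp
    have am: "a \<le> m" "m - a = k" "m - Suc j = m - a" using mjk jm' by (auto simp: a_def)
    have Ha: "zz_hyp a m N M" using H unfolding zz_hyp_def a_def by auto
    have "zz_concl a m N M" by (rule Suc.IH[rule_format, OF am(1,2) Ha])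
    then
    obtain W' where W'o1: "\<forall>p. a \<le> p \<and> p \<le> m \<longrightarrow> openin (T p (m - p)) (W' p) \<and> 0 \<in> W' p"
      and W'P: "\<forall>x. (\<forall>p. a \<le> p \<and> p \<le> m \<longrightarrow> x p \<in> W' p) \<and> d'' a (m-a) (x a) = 0
        \<and> (\<forall>p. a \<le> p \<and> p < m \<longrightarrow> d' p (m-p) (x p) + d'' (Suc p) (m - Suc p) (x (Suc p)) = 0)
     \<longrightarrow> (\<exists>u. (\<forall>p. a \<le> p \<and> p < m \<longrightarrow> u p \<in> N p)
          \<and> (\<forall>p. a \<le> p \<and> p < m \<longrightarrow> x p = (if p = a then 0 else d' (p-1) (m-p) (u (p-1))) + d'' p (m - Suc p) (u p))
          \<and> x m - (if a = m then 0 else d' (m-1) 0 (u (m-1))) \<in> M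
          \<and> d'' m 0 (x m - (if a = m then 0 else d' (m-1) 0 (u (m-1)))) = 0)"
      unfolding zz_concl_def by (elim exE conjE) (rule that; assumption)
    have W'o: "\<And>p. a \<le> p \<Longrightarrow> p \<le> m \<Longrightarrow> openin (T p (m - p)) (W' p) \<and> 0 \<in> W' p"
      using W'o1 by simp
    obtain A where A: "openin (T a (m-a)) A" "0 \<in> A" "\<And>x y. x \<in> A \<Longrightarrow> y \<in> A \<Longrightarrow> x - y \<in> W' a"
      using tgrp_diff_nbhd[OF T_tgrp, of a "m-a" "W' a"] W'o[of a] am by auto
    define q where "q = m - Suc j"
    have qa: "m - a = q" "Suc q = m - j" using am jm' by (auto simp: q_def)
    define N' where "N' = N j \<inter> {y \<in> topspace (T j q). d' j q y \<in> A}"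
    have Nj: "openin (T j q) (N j)" "0 \<in> N j" using H jm' unfolding zz_hyp_def q_def by auto
    have N'o: "openin (T j q) N'" unfolding N'_def
      apply (rule openin_Int[OF Nj(1)])
      apply (rule openin_continuous_map_preimage[OF d'_cont])
      using A(1) qa a_def by simp
    have N'0: "0 \<in> N'" unfolding N'_def using Nj A T0 by auto
    have "openin (subtopology (T j (Suc q)) (ZII T d'' j (Suc q))) (d'' j q ` N')"
      using d''_open[of j q] N'o unfolding open_map_def by blast
    then obtain Ob where Ob: "openin (T j (Suc q)) Ob" "d'' j q ` N' = Ob \<inter> ZII T d'' j (Suc q)"
      unfolding openin_subtopology by blast
    have O0: "0 \<in> Ob" using Ob(2) N'0 by (metis IntD1 d''_0 image_eqI)
    define W where "W = W'(j := Ob, a := A)"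
    have ja: "j \<noteq> a" by (simp add: a_def)
    show "zz_concl j m N M"
      unfolding zz_concl_def
    proof (intro exI[of _ W] conjI allI impI)
      fix p assume p: "j \<le> p \<and> p \<le> m"
      show "openin (T p (m - p)) (W p)"
        using p W'o[of p] Ob(1) A(1) qa unfolding W_def a_def by (auto simp: le_Suc_eq)
      show "0 \<in> W p"
        using p W'o[of p] O0 A(2) unfolding W_def a_def by (auto simp: le_Suc_eq)
    next
      fix x assume X: "(\<forall>p. j \<le> p \<and> p \<le> m \<longrightarrow> x p \<in> W p) \<and> d'' j (m-j) (x j) = 0
        \<and> (\<forall>p. j \<le> p \<and> p < m \<longrightarrow> d' p (m-p) (x p) + d'' (Suc p) (m - Suc p) (x (Suc p)) = 0)"
      have xj: "x j \<in> Ob" using X jm unfolding W_def by (auto simp: ja)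
      have XW: "\<And>p. j \<le> p \<Longrightarrow> p \<le> m \<Longrightarrow> x p \<in> W p" using X by blast
      have "x a \<in> W a" using XW[of a] am(1) a_def by simp
      then have xa: "x a \<in> A" unfolding W_def by simp
      have xjt: "x j \<in> topspace (T j (Suc q))" using xj Ob(1) openin_subset by blast
      have xat: "x a \<in> topspace (T a q)" using xa A(1) openin_subset qa by fastforce
      have "x j \<in> ZII T d'' j (Suc q)" using X xjt qa unfolding ZII_def by auto
      with xj Ob(2) obtain v where v: "v \<in> N'" "x j = d'' j q v" by blast
      have vt: "v \<in> topspace (T j q)" using v N'_def by auto
      have dv: "d' j q v \<in> A" using v N'_def by auto
      have dvt: "d' j q v \<in> topspace (T a q)" using d'_in[OF vt] a_def by simp
      define x' where "x' = x(a := x a - d' j q v)"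
      have h1: "\<forall>p. a \<le> p \<and> p \<le> m \<longrightarrow> x' p \<in> W' p"
      proof (intro allI impI)
        fix p assume p: "a \<le> p \<and> p \<le> m"
        show "x' p \<in> W' p"
        proof (cases "p = a")
          case True
          then show ?thesis using A(3)[OF xa dv] unfolding x'_def by simp
        next
          case False
          have "x p \<in> W p" using XW[of p] p a_def by simp
          then show ?thesis using False p unfolding x'_def W_def a_def by auto
        qed
      qed
      have e1: "d' j (m-j) (x j) + d'' a q (x a) = 0" using X jm' qa a_def by auto
      have e2: "d' j (m-j) (x j) + d'' a q (d' j q v) = 0"
        using anti[OF vt] v(2) qa a_def by simp
      have h2: "d'' a (m-a) (x' a) = 0"
        unfolding x'_def using e1 e2 qa d''_diff[OF xat dvt]
        by (simp add: eq_neg_iff_add_eq_0[symmetric])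
      have h3: "\<forall>p. a \<le> p \<and> p < m \<longrightarrow> d' p (m-p) (x' p) + d'' (Suc p) (m - Suc p) (x' (Suc p)) = 0"
      proof (intro allI impI)
        fix p assume p: "a \<le> p \<and> p < m"
        show "d' p (m-p) (x' p) + d'' (Suc p) (m - Suc p) (x' (Suc p)) = 0"
        proof (cases "p = a")
          case True
          have "d' p (m-p) (x' p) = d' a q (x a)"
            using True d'_diff[OF xat dvt] d'd'[OF vt] qa a_def unfolding x'_def by simp
          then show ?thesis using X p True qa unfolding x'_def a_def by auto
        next
          case False
          then show ?thesis using X p unfolding x'_def a_def by auto
        qed
      qed
      obtain u' where u': "\<forall>p. a \<le> p \<and> p < m \<longrightarrow> u' p \<in> N p"
          "\<forall>p. a \<le> p \<and> p < m \<longrightarrow> x' p = (if p = a then 0 else d' (p-1) (m-p) (u' (p-1))) + d'' p (m - Suc p) (u' p)"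
          "x' m - (if a = m then 0 else d' (m-1) 0 (u' (m-1))) \<in> M"
          "d'' m 0 (x' m - (if a = m then 0 else d' (m-1) 0 (u' (m-1)))) = 0"
        using W'P[rule_format, OF conjI[OF h1 conjI[OF h2 h3]]] by blast
      define u where "u = u'(j := v)"
      have r: "x m - (if j = m then 0 else d' (m-1) 0 (u (m-1))) = x' m - (if a = m then 0 else d' (m-1) 0 (u' (m-1)))"
      proof (cases "a = m")
        case True
        then show ?thesis using jm' qa unfolding x'_def u_def a_def by auto
      next
        case False
        then show ?thesis using jm' am unfolding x'_def u_def a_def by auto
      qed
      show "\<exists>u. (\<forall>p. j \<le> p \<and> p < m \<longrightarrow> u p \<in> N p)
          \<and> (\<forall>p. j \<le> p \<and> p < m \<longrightarrow> x p = (if p = j then 0 else d' (p-1) (m-p) (u (p-1))) + d'' p (m - Suc p) (u p))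
          \<and> x m - (if j = m then 0 else d' (m-1) 0 (u (m-1))) \<in> M
          \<and> d'' m 0 (x m - (if j = m then 0 else d' (m-1) 0 (u (m-1)))) = 0"
      proof (intro exI[of _ u] conjI allI impI)
        fix p assume p: "j \<le> p \<and> p < m"
        show "u p \<in> N p"
          using p u'(1) v(1) unfolding u_def N'_def a_def by (cases "p = j") auto
        show "x p = (if p = j then 0 else d' (p-1) (m-p) (u (p-1))) + d'' p (m - Suc p) (u p)"
        proof (cases "p = j")
          case True
          then show ?thesis using v(2) unfolding u_def q_def by simp
        next
          case False
          then have pa: "a \<le> p" using p a_def by auto
          have "x' p = (if p = a then 0 else d' (p-1) (m-p) (u' (p-1))) + d'' p (m - Suc p) (u' p)"
            using u'(2) pa p by auto
          moreover have "u p = u' p" using False u_def by simp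
          moreover have "p = a \<Longrightarrow> u (p-1) = v \<and> m - p = q \<and> p - 1 = j" using u_def a_def qa by simp
          moreover have "p \<noteq> a \<Longrightarrow> u (p-1) = u' (p-1)" using u_def a_def pa by auto
          ultimately show ?thesis unfolding x'_def using False by (cases "p = a") (auto simp: algebra_simps)
        qed
      next
        show "x m - (if j = m then 0 else d' (m-1) 0 (u (m-1))) \<in> M" using r u'(3) by simp
        show "d'' m 0 (x m - (if j = m then 0 else d' (m-1) 0 (u (m-1)))) = 0" using r u'(4) by simp
      qed
    qed
  qed
qed

lemma zigzag:
  assumes d''_open: "\<And>p q. open_map (T p q) (subtopology (T p (Suc q)) (ZII T d'' p (Suc q))) (d'' p q)"
    and "zz_hyp 0 m N M"
  shows "zz_concl 0 m N M"
  using zigzag_aux[OF d''_open, of m "m"] assms(2) by simp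

abbreviation "K \<equiv> total_complex T d' d''"

definition Tp :: "int \<Rightarrow> nat \<Rightarrow> 'a topology" where
  "Tp n p = (if int p \<le> n then T p (nat (n - int p)) else discrete_topology {0})"

lemma ctopK: "ctop K n = product_topology (Tp n) UNIV"
  by (simp add: total_complex_def Tp_def[abs_def])

lemma Kops[simp]: "cadd K n f g = (\<lambda>p. f p + g p)" "cneg K n f = (\<lambda>p. - f p)" "czero K n = (\<lambda>p. 0)"
  by (simp_all add: total_complex_def)

lemma Tp_tgrp: "tgrp (Tp n p)"
  by (simp add: Tp_def T_tgrp tgrp_discrete0)

lemma topK: "f \<in> topspace (ctop K n) \<longleftrightarrow> (\<forall>p. f p \<in> topspace (Tp n p))"
  by (simp add: ctopK topspace_product_topology PiE_UNIV_domain Pi_iff)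

lemma topK_nat: "f \<in> topspace (ctop K (int m)) \<longleftrightarrow>
    (\<forall>p. (p \<le> m \<longrightarrow> f p \<in> topspace (T p (m - p))) \<and> (m < p \<longrightarrow> f p = 0))"
  unfolding topK Tp_def by (auto simp: nat_diff_distrib not_le)

lemma topK_neg: "n < 0 \<Longrightarrow> f \<in> topspace (ctop K n) \<longleftrightarrow> f = (\<lambda>p. 0)"
  unfolding topK Tp_def by auto

lemma topK_0: "(\<lambda>p. 0) \<in> topspace (ctop K n)"
  using tgrpD(1)[OF Tp_tgrp] topK by blast
lemma topK_add: "f \<in> topspace (ctop K n) \<Longrightarrow> g \<in> topspace (ctop K n) \<Longrightarrow> (\<lambda>p. f p + g p) \<in> topspace (ctop K n)"
  using tgrpD(2)[OF Tp_tgrp] topK by blast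
lemma topK_neg': "f \<in> topspace (ctop K n) \<Longrightarrow> (\<lambda>p. - f p) \<in> topspace (ctop K n)"
  using tgrpD(3)[OF Tp_tgrp] topK by blast
lemma topK_diff: "f \<in> topspace (ctop K n) \<Longrightarrow> g \<in> topspace (ctop K n) \<Longrightarrow> (\<lambda>p. f p - g p) \<in> topspace (ctop K n)"
  using tgrpD(4)[OF Tp_tgrp] topK by blast

lemma topK_shift: "c \<in> topspace (ctop K n) \<Longrightarrow> continuous_map (ctop K n) (ctop K n) (\<lambda>f p. f p + c p)"
  unfolding ctopK continuous_map_componentwise_UNIV
proof
  fix k assume c: "c \<in> topspace (product_topology (Tp n) UNIV)"
  have h1: "continuous_map (product_topology (Tp n) UNIV) (Tp n k) (\<lambda>f. f k)"
    by (rule continuous_map_product_projection) simp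
  have h2: "continuous_map (Tp n k) (Tp n k) (\<lambda>y. y + c k)"
    by (rule tgrp_shift[OF Tp_tgrp]) (use c in \<open>simp add: topspace_product_topology PiE_UNIV_domain Pi_iff\<close>)
  from continuous_map_compose[OF h1 h2]
  show "continuous_map (product_topology (Tp n) UNIV) (Tp n k) (\<lambda>x. x k + c k)"
    by (simp add: o_def)
qed

lemma D_nat: "cdiff K (int m) f p = (if p \<le> Suc m then
      (if 1 \<le> p then d' (p-1) (Suc m - p) (f (p-1)) else 0) + (if p \<le> m then d'' p (m - p) (f p) else 0) else 0)"
proof -
  have "int p \<le> int m + 1 \<longleftrightarrow> p \<le> Suc m" by auto
  moreover have "nat (int m + 1 - int p) = Suc m - p" by auto
  moreover have "nat (int m - int p) = m - p" by auto
  ultimately show ?thesis by (simp add: total_complex_def)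
qed

lemma D_zero: "cdiff K n (\<lambda>p. 0) = (\<lambda>p. 0)"
  unfolding total_complex_def by (auto simp: fun_eq_iff)

lemma D_negdeg: "n < 0 \<Longrightarrow> f \<in> topspace (ctop K n) \<Longrightarrow> cdiff K n f = (\<lambda>p. 0)"
  using topK_neg D_zero by auto

lemma idx1: "1 \<le> p \<Longrightarrow> p \<le> Suc m \<Longrightarrow> m - (p - 1) = Suc m - p \<and> Suc (p - 1) = p" by auto
lemma idx2: "p \<le> m \<Longrightarrow> Suc (m - p) = Suc m - p" by auto

lemma D_in_nat:
  assumes f: "f \<in> topspace (ctop K (int m))"
  shows "cdiff K (int m) f \<in> topspace (ctop K (int (Suc m)))"
  unfolding topK_nat
proof (intro allI conjI impI)
  fix p assume p: "p \<le> Suc m"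
  have a: "(if 1 \<le> p then d' (p-1) (Suc m - p) (f (p-1)) else 0) \<in> topspace (T p (Suc m - p))"
  proof (cases "1 \<le> p")
    case True
    have "f (p-1) \<in> topspace (T (p-1) (Suc m - p))" using f idx1[OF True p] p unfolding topK_nat
      by (metis Suc_le_mono Suc_pred' less_eq_Suc_le True)
    from d'_in[OF this] show ?thesis using True idx1[OF True p] by simp
  qed (simp add: T0)
  have b: "(if p \<le> m then d'' p (m - p) (f p) else 0) \<in> topspace (T p (Suc m - p))"
    using f d''_in[of "f p" p "m - p"] idx2 T0 unfolding topK_nat by auto
  show "cdiff K (int m) f p \<in> topspace (T p (Suc m - p))"
    using Tadd[OF a b] p by (simp add: D_nat)
next
  fix p assume "Suc m < p" then show "cdiff K (int m) f p = 0" by (simp add: D_nat)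
qed

lemma D_in: "f \<in> topspace (ctop K n) \<Longrightarrow> cdiff K n f \<in> topspace (ctop K (n + 1))"
proof (cases "n < 0")
  case True
  assume "f \<in> topspace (ctop K n)"
  then show ?thesis using True D_negdeg topK_0 by auto
next
  case False
  then obtain m where "n = int m" by (metis nonneg_int_cases not_less)
  then show "f \<in> topspace (ctop K n) \<Longrightarrow> ?thesis" using D_in_nat by (simp add: add.commute)
qed

lemma topK_prev:
  assumes f: "f \<in> topspace (ctop K (int m))" and "1 \<le> p" "p \<le> Suc m"
  shows "f (p-1) \<in> topspace (T (p-1) (Suc m - p))"
  using f assms(2,3) unfolding topK_nat by (metis Suc_diff_le Suc_le_mono diff_Suc_Suc le_add_diff_inverse plus_1_eq_Suc)

lemma topK_cur:
  assumes f: "f \<in> topspace (ctop K (int m))" and "p \<le> m"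
  shows "f p \<in> topspace (T p (m - p))"
  using f assms(2) unfolding topK_nat by blast

lemma D_add_nat:
  assumes f: "f \<in> topspace (ctop K (int m))" and g: "g \<in> topspace (ctop K (int m))"
  shows "cdiff K (int m) (\<lambda>p. f p + g p) = (\<lambda>p. cdiff K (int m) f p + cdiff K (int m) g p)"
proof
  fix p
  have a: "(if 1 \<le> p then d' (p-1) (Suc m - p) (f (p-1) + g (p-1)) else 0) =
     (if 1 \<le> p then d' (p-1) (Suc m - p) (f (p-1)) else 0) + (if 1 \<le> p then d' (p-1) (Suc m - p) (g (p-1)) else 0)"
    if "p \<le> Suc m" using d'_add[OF topK_prev[OF f] topK_prev[OF g]] that by auto
  have b: "(if p \<le> m then d'' p (m - p) (f p + g p) else 0) =
     (if p \<le> m then d'' p (m - p) (f p) else 0) + (if p \<le> m then d'' p (m - p) (g p) else 0)"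
    using d''_add[OF topK_cur[OF f] topK_cur[OF g]] by auto
  show "cdiff K (int m) (\<lambda>p. f p + g p) p = cdiff K (int m) f p + cdiff K (int m) g p"
    unfolding D_nat using a b by (simp add: algebra_simps)
qed

lemma D_add:
  assumes f: "f \<in> topspace (ctop K n)" and g: "g \<in> topspace (ctop K n)"
  shows "cdiff K n (\<lambda>p. f p + g p) = (\<lambda>p. cdiff K n f p + cdiff K n g p)"
proof (cases "n < 0")
  case True
  then show ?thesis using f g topK_neg D_zero by auto
next
  case False
  then obtain m where "n = int m" by (metis nonneg_int_cases not_less)
  then show ?thesis using D_add_nat f g by simp
qed

lemma D_neg:
  assumes f: "f \<in> topspace (ctop K n)"
  shows "cdiff K n (\<lambda>p. - f p) = (\<lambda>p. - cdiff K n f p)"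
proof -
  have "cdiff K n (\<lambda>p. - f p + f p) = (\<lambda>p. cdiff K n (\<lambda>p. - f p) p + cdiff K n f p)"
    by (rule D_add[OF topK_neg'[OF f] f])
  then have "(\<lambda>p. cdiff K n (\<lambda>p. - f p) p + cdiff K n f p) = (\<lambda>p. 0)" using D_zero by simp
  then have "\<And>p. cdiff K n (\<lambda>p. - f p) p + cdiff K n f p = 0" by (simp add: fun_eq_iff)
  then show ?thesis by (simp add: fun_eq_iff add_eq_0_iff2)
qed

lemma D_diff:
  assumes f: "f \<in> topspace (ctop K n)" and g: "g \<in> topspace (ctop K n)"
  shows "cdiff K n (\<lambda>p. f p - g p) = (\<lambda>p. cdiff K n f p - cdiff K n g p)"
  using D_add[OF f topK_neg'[OF g]] D_neg[OF g] by simp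

lemma DD_nat:
  assumes f: "f \<in> topspace (ctop K (int m))"
  shows "cdiff K (int (Suc m)) (cdiff K (int m) f) = (\<lambda>p. 0)"
proof
  fix p
  define g where "g = cdiff K (int m) f"
  show "cdiff K (int (Suc m)) (cdiff K (int m) f) p = 0"
  proof (cases p)
    case 0
    have "g 0 = d'' 0 m (f 0)" unfolding g_def D_nat by simp
    then show ?thesis unfolding D_nat g_def[symmetric] using 0 d''d''[OF topK_cur[OF f, of 0]] by simp
  next
    case (Suc r)
    show ?thesis
    proof (cases "r \<le> m")
      case rm: True
      define A where "A = (if 1 \<le> r then d' (r-1) (Suc m - r) (f (r-1)) else 0)"
      define B where "B = d'' r (m-r) (f r)"
      define C where "C = (if Suc r \<le> m then d'' (Suc r) (m - Suc r) (f (Suc r)) else 0)"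
      have gr: "g r = A + B" unfolding g_def D_nat A_def B_def using rm by simp
      have gs: "g (Suc r) = d' r (m - r) (f r) + C" unfolding g_def D_nat C_def using rm by simp
      have fr: "f r \<in> topspace (T r (m - r))" using topK_cur[OF f rm] .
      have At: "A \<in> topspace (T r (Suc (m - r)))"
      proof (cases "1 \<le> r")
        case True
        from d'_in[OF topK_prev[OF f True]] rm True show ?thesis unfolding A_def
          by (simp add: Suc_diff_le)
      qed (simp add: A_def T0)
      have A0: "d' r (Suc (m - r)) A = 0"
      proof (cases "1 \<le> r")
        case True
        from d'd'[OF topK_prev[OF f True]] rm True show ?thesis unfolding A_def
          by (simp add: Suc_diff_le)
      qed (simp add: A_def)
      have Bt: "B \<in> topspace (T r (Suc (m - r)))" using d''_in[OF fr] B_def by simp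
      have d'fr: "d' r (m - r) (f r) \<in> topspace (T (Suc r) (m - r))" using d'_in[OF fr] .
      have Ct: "C \<in> topspace (T (Suc r) (m - r))"
      proof (cases "Suc r \<le> m")
        case True
        from d''_in[OF topK_cur[OF f True]] True show ?thesis unfolding C_def
          by (simp add: Suc_diff_Suc)
      qed (simp add: C_def T0)
      have C0: "d'' (Suc r) (m - r) C = 0"
      proof (cases "Suc r \<le> m")
        case True
        from d''d''[OF topK_cur[OF f True]] True show ?thesis unfolding C_def
          by (simp add: Suc_diff_Suc)
      qed (simp add: C_def)
      have "cdiff K (int (Suc m)) g p = d' r (Suc (m - r)) (g r) + d'' (Suc r) (m - r) (g (Suc r))"
        unfolding D_nat using Suc rm by (simp add: Suc_diff_le)
      also have "\<dots> = d' r (Suc (m - r)) B + d'' (Suc r) (m - r) (d' r (m - r) (f r))"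
        unfolding gr gs d'_add[OF At Bt] d''_add[OF d'fr Ct] A0 C0 by simp
      also have "\<dots> = 0" unfolding B_def using anti[OF fr] .
      finally show ?thesis unfolding g_def .
    next
      case False
      show ?thesis
      proof (cases "r = Suc m")
        case True
        have "g r = d' m 0 (f m)" unfolding g_def D_nat using True by simp
        moreover have "f m \<in> topspace (T m 0)" using topK_cur[OF f, of m] by simp
        ultimately show ?thesis unfolding D_nat g_def[symmetric] using Suc True d'd' by simp
      next
        case False
        then show ?thesis unfolding D_nat using \<open>\<not> r \<le> m\<close> Suc by simp
      qed
    qed
  qed
qed

lemma DD:
  assumes f: "f \<in> topspace (ctop K n)"
  shows "cdiff K (n + 1) (cdiff K n f) = (\<lambda>p. 0)"
proof (cases "n < 0")
  case True
  then show ?thesis using f D_negdeg D_zero by simp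
next
  case False
  then obtain m where "n = int m" by (metis nonneg_int_cases not_less)
  then show ?thesis using DD_nat f by (simp add: add.commute)
qed

abbreviation "S \<equiv> KI_set T d' d''"

lemma S_sub: "S n \<subseteq> topspace (ctop K n)"
  unfolding KI_set_def by auto

lemma S_0: "(\<lambda>p. 0) \<in> S n"
  unfolding KI_set_def ZII_def using topK_0 T0 by auto

lemma S_add: "f \<in> S n \<Longrightarrow> g \<in> S n \<Longrightarrow> (\<lambda>p. f p + g p) \<in> S n"
  unfolding KI_set_def ZII_def using topK_add Tadd d''_add by auto

lemma S_neg: "f \<in> S n \<Longrightarrow> (\<lambda>p. - f p) \<in> S n"
  unfolding KI_set_def ZII_def using topK_neg' Tneg d''_neg by auto

lemma S_diff: "f \<in> S n \<Longrightarrow> g \<in> S n \<Longrightarrow> (\<lambda>p. f p - g p) \<in> S n"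
  using S_add[OF _ S_neg, of f n g] by simp

lemma S_nat: "f \<in> S (int m) \<longleftrightarrow> f \<in> topspace (ctop K (int m)) \<and> (\<forall>p. p \<noteq> m \<longrightarrow> f p = 0) \<and> f m \<in> topspace (T m 0) \<and> d'' m 0 (f m) = 0"
  unfolding KI_set_def ZII_def by auto

lemma S_D: assumes f: "f \<in> S n" shows "cdiff K n f \<in> S (n + 1)"
proof (cases "n < 0")
  case True
  have "f \<in> topspace (ctop K n)" using f S_sub by blast
  then have "cdiff K n f = (\<lambda>p. 0)" by (rule D_negdeg[OF True])
  then show ?thesis using S_0 by simp
next
  case False
  then obtain m where n: "n = int m" by (metis nonneg_int_cases not_less)
  have f': "f \<in> topspace (ctop K (int m))" "\<And>p. p \<noteq> m \<Longrightarrow> f p = 0" "f m \<in> topspace (T m 0)" "d'' m 0 (f m) = 0"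
    using f n S_nat by auto
  have z: "cdiff K (int m) f p = 0" if "p \<noteq> Suc m" for p
    unfolding D_nat using f' that by (cases "p = m") auto
  have s: "cdiff K (int m) f (Suc m) = d' m 0 (f m)" unfolding D_nat by simp
  have "d'' (Suc m) 0 (d' m 0 (f m)) = 0" using anti[OF f'(3)] f'(4) by simp
  then have "cdiff K (int m) f \<in> S (int (Suc m))"
    unfolding S_nat using D_in[OF f'(1)] z s d'_in[OF f'(3)] by (auto simp: add.commute)
  then show ?thesis using n by (simp add: add.commute)
qed

lemma Tp_le: "p \<le> m \<Longrightarrow> Tp (int m) p = T p (m - p)"
  by (simp add: Tp_def nat_diff_distrib)
lemma Tp_gt: "m < p \<Longrightarrow> Tp (int m) p = discrete_topology {0}"
  by (simp add: Tp_def)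
lemma Tp_pred: "p < m \<Longrightarrow> Tp (int m - 1) p = T p (m - Suc p)"
proof -
  assume p: "p < m"
  have "int p \<le> int m - 1" using p by simp
  moreover have "int m - 1 - int p = int (m - Suc p)" using p by (simp add: of_nat_diff)
  then have "nat (int m - 1 - int p) = m - Suc p" by simp
  ultimately show ?thesis by (simp add: Tp_def)
qed
lemma Tp_pred_ge: "m \<le> p \<Longrightarrow> Tp (int m - 1) p = discrete_topology {0}"
  by (simp add: Tp_def)

lemma D_pred:
  assumes "1 \<le> m"
  shows "cdiff K (int m - 1) f p = (if p \<le> m then
      (if 1 \<le> p then d' (p-1) (m - p) (f (p-1)) else 0) + (if p < m then d'' p (m - Suc p) (f p) else 0) else 0)"
proof -
  obtain k where k: "m = Suc k" using assms by (cases m) auto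
  have "int m - 1 = int k" using k by simp
  then show ?thesis unfolding k by (simp add: D_nat less_Suc_eq_le)
qed

lemma box_around:
  assumes "openin (ctop K n) V" "b \<in> V"
  obtains Vb where "finite {i. Vb i \<noteq> topspace (Tp n i)}" "\<And>i. openin (Tp n i) (Vb i)"
    "\<And>i. b i \<in> Vb i" "\<And>f. (\<forall>i. f i \<in> Vb i) \<Longrightarrow> f \<in> V"
proof -
  from assms(1)[unfolded ctopK openin_product_topology_alt, rule_format, OF assms(2)]
  obtain U where U: "finite {i \<in> UNIV. U i \<noteq> topspace (Tp n i)}" "\<forall>i\<in>UNIV. openin (Tp n i) (U i)"
     "b \<in> Pi\<^sub>E UNIV U" "Pi\<^sub>E UNIV U \<subseteq> V" by blast
  show thesis
  proof (rule that[of U])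
    show "finite {i. U i \<noteq> topspace (Tp n i)}" using U(1) by simp
    show "\<And>i. openin (Tp n i) (U i)" using U(2) by simp
    show "\<And>i. b i \<in> U i" using U(3) by (simp add: PiE_UNIV_domain Pi_iff)
    show "\<And>f. \<forall>i. f i \<in> U i \<Longrightarrow> f \<in> V" using U(4) by (auto simp: PiE_UNIV_domain Pi_iff)
  qed
qed

lemma core:
  assumes d''_open: "\<And>p q. open_map (T p q) (subtopology (T p (Suc q)) (ZII T d'' p (Suc q))) (d'' p q)"
    and V: "openin (ctop K (int m - 1)) V" "b \<in> V"
    and U: "openin (ctop K (int m)) U" "a \<in> U"
  shows "\<exists>B. openin (ctop K (int m)) B \<and> (\<lambda>p. 0) \<in> B \<and>
     (\<forall>x\<in>B. (\<forall>p\<le>m. cdiff K (int m) x p = 0) \<longrightarrow>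
        (\<exists>u\<in>topspace (ctop K (int m - 1)). (\<lambda>p. b p - u p) \<in> V
           \<and> (\<lambda>p. x p - cdiff K (int m - 1) u p) \<in> S (int m)
           \<and> (\<lambda>p. a p + (x p - cdiff K (int m - 1) u p)) \<in> U))"
proof -
  obtain Vb where Vb: "\<And>i. openin (Tp (int m - 1) i) (Vb i)" "\<And>i. b i \<in> Vb i" "\<And>f. (\<forall>i. f i \<in> Vb i) \<Longrightarrow> f \<in> V"
    using box_around[OF V] by metis
  obtain Ua where Ua: "\<And>i. openin (Tp (int m) i) (Ua i)" "\<And>i. a i \<in> Ua i" "\<And>f. (\<forall>i. f i \<in> Ua i) \<Longrightarrow> f \<in> U"
    using box_around[OF U] by metis
  define N where "N p = {y \<in> topspace (T p (m - Suc p)). b p - y \<in> Vb p}" for p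
  define M where "M = {y \<in> topspace (T m 0). y + a m \<in> Ua m}"
  have bt: "b p \<in> topspace (Tp (int m - 1) p)" for p using Vb(1,2) openin_subset by blast
  have at: "a p \<in> topspace (Tp (int m) p)" for p using Ua(1,2) openin_subset by blast
  have hyp: "zz_hyp 0 m N M"
    unfolding zz_hyp_def
  proof (intro allI conjI impI)
    fix p assume p: "0 \<le> p \<and> p < m"
    show "openin (T p (m - Suc p)) (N p)" unfolding N_def
      using tgrp_nbhd_rshift[OF T_tgrp, of "b p" p "m - Suc p" "Vb p"] Vb(1)[of p] bt[of p] p Tp_pred[of p m] by simp
    show "0 \<in> N p" unfolding N_def using T0 Vb(2) by simp
  next
    show "openin (T m 0) M" unfolding M_def
      using tgrp_nbhd_shift[OF T_tgrp, of "a m" m 0 "Ua m"] Ua(1)[of m] at[of m] Tp_le[of m m] by simp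
    show "0 \<in> M" unfolding M_def using T0 Ua(2) by simp
  qed
  obtain W where Wo1: "\<forall>p. 0 \<le> p \<and> p \<le> m \<longrightarrow> openin (T p (m - p)) (W p) \<and> 0 \<in> W p"
    and WP: "\<forall>x. (\<forall>p. 0 \<le> p \<and> p \<le> m \<longrightarrow> x p \<in> W p) \<and> d'' 0 (m-0) (x 0) = 0
        \<and> (\<forall>p. 0 \<le> p \<and> p < m \<longrightarrow> d' p (m-p) (x p) + d'' (Suc p) (m - Suc p) (x (Suc p)) = 0)
     \<longrightarrow> (\<exists>u. (\<forall>p. 0 \<le> p \<and> p < m \<longrightarrow> u p \<in> N p)
          \<and> (\<forall>p. 0 \<le> p \<and> p < m \<longrightarrow> x p = (if p = 0 then 0 else d' (p-1) (m-p) (u (p-1))) + d'' p (m - Suc p) (u p))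
          \<and> x m - (if 0 = m then 0 else d' (m-1) 0 (u (m-1))) \<in> M
          \<and> d'' m 0 (x m - (if 0 = m then 0 else d' (m-1) 0 (u (m-1)))) = 0)"
    using zigzag[OF d''_open hyp] unfolding zz_concl_def by (elim exE conjE) (rule that; assumption)
  have Wo: "\<And>p. p \<le> m \<Longrightarrow> openin (T p (m - p)) (W p) \<and> 0 \<in> W p"
    using Wo1 by simp
  define Wb where "Wb p = (if p \<le> m then W p else topspace (Tp (int m) p))" for p
  define B where "B = Pi\<^sub>E UNIV Wb"
  have Bo: "openin (ctop K (int m)) B"
    unfolding B_def ctopK openin_PiE_gen
  proof (rule disjI2, intro conjI ballI)
    show "finite {i \<in> UNIV. Wb i \<noteq> topspace (Tp (int m) i)}"
      by (rule finite_subset[of _ "{..m}"]) (auto simp: Wb_def)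
    fix i show "openin (Tp (int m) i) (Wb i)" using Wo Tp_le by (simp add: Wb_def)
  qed
  have B0: "(\<lambda>p. 0) \<in> B" unfolding B_def Wb_def PiE_UNIV_domain Pi_iff
    using Wo topK_0 topK by auto
  show ?thesis
  proof (intro exI[of _ B] conjI Bo B0 ballI impI)
    fix x assume xB: "x \<in> B" and Dx: "\<forall>p\<le>m. cdiff K (int m) x p = 0"
    have xt: "x \<in> topspace (ctop K (int m))" using Bo xB openin_subset by blast
    have xW0: "\<forall>i. x i \<in> (if i \<le> m then W i else topspace (Tp (int m) i))"
      using xB unfolding B_def Wb_def PiE_UNIV_domain Pi_iff by simp
    have xW: "\<forall>p. 0 \<le> p \<and> p \<le> m \<longrightarrow> x p \<in> W p"
    proof (intro allI impI)
      fix p assume "0 \<le> p \<and> p \<le> m" then show "x p \<in> W p" using xW0[rule_format, of p] by simp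
    qed
    have c0: "d'' 0 (m-0) (x 0) = 0" using Dx[rule_format, of 0] by (simp add: D_nat)
    have c1: "\<forall>p. 0 \<le> p \<and> p < m \<longrightarrow> d' p (m-p) (x p) + d'' (Suc p) (m - Suc p) (x (Suc p)) = 0"
    proof (intro allI impI)
      fix p assume p: "0 \<le> p \<and> p < m"
      have "cdiff K (int m) x (Suc p) = 0" using Dx p by simp
      then show "d' p (m-p) (x p) + d'' (Suc p) (m - Suc p) (x (Suc p)) = 0"
        unfolding D_nat using p by simp
    qed
    obtain u where u: "\<forall>p. p < m \<longrightarrow> u p \<in> N p"
          "\<forall>p. p < m \<longrightarrow> x p = (if p = 0 then 0 else d' (p-1) (m-p) (u (p-1))) + d'' p (m - Suc p) (u p)"
          "x m - (if 0 = m then 0 else d' (m-1) 0 (u (m-1))) \<in> M"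
          "d'' m 0 (x m - (if 0 = m then 0 else d' (m-1) 0 (u (m-1)))) = 0"
      using WP[rule_format, OF conjI[OF xW conjI[OF c0 c1]]] by auto
    define r where "r = x m - (if 0 = m then 0 else d' (m-1) 0 (u (m-1)))"
    define u' where "u' p = (if p < m then u p else 0)" for p
    have u't: "u' \<in> topspace (ctop K (int m - 1))"
      unfolding topK
    proof
      fix p show "u' p \<in> topspace (Tp (int m - 1) p)"
        using u(1) Tp_pred[of p m] Tp_pred_ge[of m p] unfolding u'_def N_def by auto
    qed
    have xmDu: "(\<lambda>p. x p - cdiff K (int m - 1) u' p) = (\<lambda>p. if p = m then r else 0)"
    proof
      fix p
      show "x p - cdiff K (int m - 1) u' p = (if p = m then r else 0)"
      proof (cases "m = 0")
        case True
        have "cdiff K (int m - 1) u' = (\<lambda>p. 0)" using True D_negdeg u't by simp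
        then show ?thesis using True xt r_def unfolding topK_nat by auto
      next
        case False
        then have m1: "1 \<le> m" by simp
        consider "p < m" | "p = m" | "m < p" by linarith
        then show ?thesis
        proof cases
          case 1 then show ?thesis using u(2) unfolding D_pred[OF m1] u'_def by auto
        next
          case 2 then show ?thesis using False unfolding D_pred[OF m1] u'_def r_def by auto
        next
          case 3 then show ?thesis using xt unfolding D_pred[OF m1] topK_nat by auto
        qed
      qed
    qed
    have rM: "r \<in> M" using u(3) r_def by simp
    have rS: "(\<lambda>p. if p = m then r else 0) \<in> S (int m)"
      unfolding S_nat topK_nat using rM u(4) r_def M_def T0 by auto
    show "\<exists>u\<in>topspace (ctop K (int m - 1)). (\<lambda>p. b p - u p) \<in> V
           \<and> (\<lambda>p. x p - cdiff K (int m - 1) u p) \<in> S (int m)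
           \<and> (\<lambda>p. a p + (x p - cdiff K (int m - 1) u p)) \<in> U"
    proof (intro bexI[OF _ u't] conjI)
      show "(\<lambda>p. b p - u' p) \<in> V"
        by (rule Vb(3)) (use u(1) Vb(2) in \<open>auto simp: u'_def N_def\<close>)
      show "(\<lambda>p. x p - cdiff K (int m - 1) u' p) \<in> S (int m)" using xmDu rS by simp
      have "(\<lambda>p. a p + (x p - cdiff K (int m - 1) u' p)) = (\<lambda>p. a p + (if p = m then r else 0))"
        using xmDu by metis
      moreover have "(\<lambda>p. a p + (if p = m then r else 0)) \<in> U"
        by (rule Ua(3)) (use Ua(2) rM in \<open>auto simp: M_def add.commute\<close>)
      ultimately show "(\<lambda>p. a p + (x p - cdiff K (int m - 1) u' p)) \<in> U" by simp
    qed
  qed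
qed

abbreviation "KIc \<equiv> KI_complex T d' d''"

lemma KIc_simps[simp]: "ctop KIc n = subtopology (ctop K n) (S n)" "cdiff KIc = cdiff K"
  "czero KIc = czero K" "cadd KIc = cadd K" "cneg KIc = cneg K"
  by (simp_all add: KI_complex_def)

lemma cycles_K: "cycles K n = {x \<in> topspace (ctop K n). cdiff K n x = (\<lambda>p. 0)}"
  by (simp add: cycles_def)

lemma cycles_KIc: "cycles KIc n = {x \<in> S n. cdiff K n x = (\<lambda>p. 0)}"
  using S_sub by (auto simp: cycles_def)

lemma cycles_top_KIc: "cycles_top KIc n = subtopology (ctop K n) (cycles KIc n)"
  unfolding cycles_top_def by (simp add: subtopology_subtopology cycles_KIc Int_absorb1)

lemma top_cycles_top_K: "topspace (cycles_top K n) = cycles K n"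
  unfolding cycles_top_def cycles_K by auto

lemma F_cycle:
  assumes a: "a \<in> topspace (ctop K n)" "cdiff K n a = (\<lambda>p. 0)" and b: "b \<in> topspace (ctop K (n - 1))"
  shows "(\<lambda>p. a p + - cdiff K (n - 1) b p) \<in> cycles K n"
proof -
  have Db: "cdiff K (n - 1) b \<in> topspace (ctop K n)" using D_in[OF b] by simp
  have "cdiff K n (cdiff K (n - 1) b) = (\<lambda>p. 0)" using DD[OF b] by simp
  then show ?thesis
    unfolding cycles_K using D_diff[OF a(1) Db] a topK_diff[OF a(1) Db] by simp
qed

lemma part2:
  assumes d''_open: "\<And>p q. open_map (T p q) (subtopology (T p (Suc q)) (ZII T d'' p (Suc q))) (d'' p q)"
  shows "quasi_open KIc K (\<lambda>n x. x)"
  unfolding quasi_open_def open_map_def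
proof (intro allI impI)
  fix n :: int and G
  assume G: "openin (prod_topology (cycles_top KIc n) (ctop K (n - 1))) G"
  define F where "F = (\<lambda>(a, b). cadd K n a (cneg K n (cdiff K (n - 1) b)))"
  have F: "F (a,b) = (\<lambda>p. a p + - cdiff K (n - 1) b p)" for a b by (simp add: F_def)
  show "openin (cycles_top K n) ((\<lambda>(a, b). cadd K n a (cneg K n (cdiff K (n - 1) b))) ` G)"
    unfolding F_def[symmetric]
  proof (subst openin_subopen, intro ballI)
    fix w assume "w \<in> F ` G"
    then obtain a b where ab: "(a,b) \<in> G" "w = F (a,b)" by auto
    obtain U V where UV: "openin (cycles_top KIc n) U" "openin (ctop K (n - 1)) V" "a \<in> U" "b \<in> V" "U \<times> V \<subseteq> G"
      using G[unfolded openin_prod_topology_alt, rule_format, OF ab(1)] by blast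
    obtain U0 where U0: "openin (ctop K n) U0" "U = U0 \<inter> cycles KIc n"
      using UV(1) unfolding cycles_top_KIc openin_subtopology by blast
    have aS: "a \<in> S n" "cdiff K n a = (\<lambda>p. 0)" using UV(3) U0(2) cycles_KIc by auto
    have at: "a \<in> topspace (ctop K n)" using aS S_sub by auto
    have bt: "b \<in> topspace (ctop K (n-1))" using UV(2,4) openin_subset by blast
    have wc: "w \<in> cycles K n" using F_cycle[OF at aS(2) bt] ab F by simp
    have wt: "w \<in> topspace (ctop K n)" using wc cycles_K by auto
    show "\<exists>T'. openin (cycles_top K n) T' \<and> w \<in> T' \<and> T' \<subseteq> F ` G"
    proof (cases "n < 0")
      case True
      have "cycles K n = {w}" using wc True topK_neg unfolding cycles_K by auto
      moreover have "openin (cycles_top K n) (cycles K n)" using openin_topspace[of "cycles_top K n"] top_cycles_top_K by simp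
      ultimately show ?thesis using ab by (intro exI[of _ "cycles K n"]) auto
    next
      case False
      then obtain m where n: "n = int m" by (metis nonneg_int_cases not_less)
      obtain B where B: "openin (ctop K (int m)) B" "(\<lambda>p. 0) \<in> B"
        "\<And>x. x \<in> B \<Longrightarrow> (\<forall>p\<le>m. cdiff K (int m) x p = 0) \<Longrightarrow>
        (\<exists>u\<in>topspace (ctop K (int m - 1)). (\<lambda>p. b p - u p) \<in> V
           \<and> (\<lambda>p. x p - cdiff K (int m - 1) u p) \<in> S (int m)
           \<and> (\<lambda>p. a p + (x p - cdiff K (int m - 1) u p)) \<in> U0)"
        using core[OF d''_open, of m V b U0 a] UV(2,4) U0 UV(3) n by auto
      define T' where "T' = {z \<in> topspace (ctop K n). (\<lambda>p. z p + - w p) \<in> B} \<inter> cycles K n"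
      have "openin (ctop K n) {z \<in> topspace (ctop K n). (\<lambda>p. z p + - w p) \<in> B}"
        using openin_continuous_map_preimage[OF topK_shift[OF topK_neg'[OF wt]]] B(1) n by simp
      then have T'o: "openin (cycles_top K n) T'"
        unfolding cycles_top_def openin_subtopology T'_def by blast
      have wT: "w \<in> T'" unfolding T'_def using wt wc B(2) by simp
      have "T' \<subseteq> F ` G"
      proof
        fix z assume zT: "z \<in> T'"
        define x where "x = (\<lambda>p. z p - w p)"
        have zt: "z \<in> topspace (ctop K n)" and zc: "cdiff K n z = (\<lambda>p. 0)"
          using zT unfolding T'_def cycles_K by auto
        have xB: "x \<in> B" using zT unfolding T'_def x_def by simp
        have Dx: "cdiff K n x = (\<lambda>p. 0)"
          unfolding x_def D_diff[OF zt wt] using zc wc cycles_K by auto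
        obtain u where u: "u \<in> topspace (ctop K (int m - 1))" "(\<lambda>p. b p - u p) \<in> V"
           "(\<lambda>p. x p - cdiff K (int m - 1) u p) \<in> S (int m)"
           "(\<lambda>p. a p + (x p - cdiff K (int m - 1) u p)) \<in> U0"
          using B(3)[OF xB] Dx n by auto
        define a' where "a' = (\<lambda>p. a p + (x p - cdiff K (int m - 1) u p))"
        define b' where "b' = (\<lambda>p. b p - u p)"
        have xt: "x \<in> topspace (ctop K n)" unfolding x_def using topK_diff[OF zt wt] .
        have Dut: "cdiff K (n - 1) u \<in> topspace (ctop K n)" using D_in[OF u(1)] n by simp
        have a'S: "a' \<in> S n" unfolding a'_def using S_add[OF aS(1)] u(3) n by simp
        have "cdiff K n (\<lambda>p. x p - cdiff K (int m - 1) u p) = (\<lambda>p. 0)"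
          using D_diff[OF xt Dut] Dx DD[OF u(1)] n by simp
        then have Da': "cdiff K n a' = (\<lambda>p. 0)"
          unfolding a'_def using D_add[OF at, of "\<lambda>p. x p - cdiff K (int m - 1) u p"] aS(2) topK_diff[OF xt Dut] n
          by simp
        have a'U: "a' \<in> U" using U0(2) u(4) a'S Da' cycles_KIc a'_def by auto
        have b'V: "b' \<in> V" using u(2) b'_def by simp
        have "F (a', b') = z"
        proof -
          have "cdiff K (n - 1) b' = (\<lambda>p. cdiff K (n - 1) b p - cdiff K (n - 1) u p)"
            unfolding b'_def using D_diff[OF bt] u(1) n by simp
          then show ?thesis unfolding F a'_def x_def using ab(2) F n by (auto simp: algebra_simps)
        qed
        moreover have "(a', b') \<in> G" using UV(5) a'U b'V by auto
        ultimately show "z \<in> F ` G" by force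
      qed
      then show ?thesis using T'o wT by blast
    qed
  qed
qed


end


context DC begin
lemma Bd_K: "boundaries K n = cdiff K (n - 1) ` topspace (ctop K (n - 1))"
  by (simp add: boundaries_def)
lemma Bd_KIc: "boundaries KIc n = cdiff K (n - 1) ` S (n - 1)"
  using S_sub by (simp add: boundaries_def Int_absorb1)

lemma Bd_0: "(\<lambda>p. 0) \<in> boundaries K n"
  unfolding Bd_K using D_zero topK_0 by (metis image_eqI)
lemma Bd_add: "x \<in> boundaries K n \<Longrightarrow> y \<in> boundaries K n \<Longrightarrow> (\<lambda>p. x p + y p) \<in> boundaries K n"
proof -
  assume "x \<in> boundaries K n" "y \<in> boundaries K n"
  then obtain a b where ab: "a \<in> topspace (ctop K (n - 1))" "x = cdiff K (n - 1) a"
     "b \<in> topspace (ctop K (n - 1))" "y = cdiff K (n - 1) b" unfolding Bd_K by auto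
  have "(\<lambda>p. x p + y p) = cdiff K (n - 1) (\<lambda>p. a p + b p)" using D_add[OF ab(1,3)] ab(2,4) by simp
  then show ?thesis unfolding Bd_K using topK_add[OF ab(1,3)] by blast
qed
lemma Bd_neg: "x \<in> boundaries K n \<Longrightarrow> (\<lambda>p. - x p) \<in> boundaries K n"
proof -
  assume "x \<in> boundaries K n"
  then obtain a where a: "a \<in> topspace (ctop K (n - 1))" "x = cdiff K (n - 1) a" unfolding Bd_K by auto
  have "(\<lambda>p. - x p) = cdiff K (n - 1) (\<lambda>p. - a p)" using D_neg[OF a(1)] a(2) by simp
  then show ?thesis unfolding Bd_K using topK_neg'[OF a(1)] by blast
qed
lemma Bd_diff: "x \<in> boundaries K n \<Longrightarrow> y \<in> boundaries K n \<Longrightarrow> (\<lambda>p. x p - y p) \<in> boundaries K n"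
  using Bd_add[OF _ Bd_neg, of x n y] by simp

lemma hK: "hclass K n x = {y \<in> cycles K n. (\<lambda>p. y p - x p) \<in> boundaries K n}"
  by (simp add: hclass_def)

lemma hK_eq:
  assumes "(\<lambda>p. x p - y p) \<in> boundaries K n"
  shows "hclass K n x = hclass K n y"
proof -
  have "(\<lambda>p. z p - x p) \<in> boundaries K n \<longleftrightarrow> (\<lambda>p. z p - y p) \<in> boundaries K n" for z
  proof
    assume h: "(\<lambda>p. z p - x p) \<in> boundaries K n"
    show "(\<lambda>p. z p - y p) \<in> boundaries K n" using Bd_add[OF h assms] by simp
  next
    assume h: "(\<lambda>p. z p - y p) \<in> boundaries K n"
    show "(\<lambda>p. z p - x p) \<in> boundaries K n" using Bd_diff[OF h assms] by simp
  qed
  then show ?thesis unfolding hK by blast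
qed

lemma hK_self: "x \<in> cycles K n \<Longrightarrow> x \<in> hclass K n x"
  unfolding hK using Bd_0 by simp

lemma hK_mem: "z \<in> hclass K n a \<Longrightarrow> (\<lambda>p. z p - a p) \<in> boundaries K n"
  unfolding hK by simp

lemma cyc_sub: "cycles KIc n \<subseteq> cycles K n"
  unfolding cycles_KIc cycles_K using S_sub by auto

lemma BdI_sub: "boundaries KIc n \<subseteq> boundaries K n"
  unfolding Bd_KIc Bd_K using S_sub by auto

lemma quotient_topology_open:
  "openin (quotient_topology X q) U \<longleftrightarrow> U \<subseteq> q ` topspace X \<and> openin X {x \<in> topspace X. q x \<in> U}"
proof -
  have e1: "\<And>S T. {x \<in> topspace X. q x \<in> S \<inter> T} = {x \<in> topspace X. q x \<in> S} \<inter> {x \<in> topspace X. q x \<in> T}" by auto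
  have e2: "\<And>KK. {x \<in> topspace X. q x \<in> \<Union>KK} = \<Union>((\<lambda>S. {x \<in> topspace X. q x \<in> S}) ` KK)" by auto
  have "istopology (\<lambda>U. U \<subseteq> q ` topspace X \<and> openin X {x \<in> topspace X. q x \<in> U})"
    unfolding istopology_def e1 e2 by (auto intro!: openin_Int openin_Union)
  then show ?thesis unfolding quotient_topology_def by simp
qed

lemma topspace_quotient_topology: "topspace (quotient_topology X q) = q ` topspace X"
proof -
  have e: "{x \<in> topspace X. q x \<in> q ` topspace X} = topspace X" by auto
  have "openin (quotient_topology X q) (q ` topspace X)"
    unfolding quotient_topology_open e by simp
  then have 1: "q ` topspace X \<subseteq> topspace (quotient_topology X q)" by (rule openin_subset)
  have "openin (quotient_topology X q) (topspace (quotient_topology X q))" by simp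
  then have 2: "topspace (quotient_topology X q) \<subseteq> q ` topspace X" unfolding quotient_topology_open by blast
  show ?thesis using 1 2 by blast
qed

lemma top_cycles_top: "topspace (cycles_top A n) = cycles A n"
  unfolding cycles_top_def cycles_def by auto

lemma part3:
  assumes qo: "quasi_open KIc K (\<lambda>n x. x)"
  shows "open_map (coh_top KIc n) (coh_top K n) (coh_map K (\<lambda>n x. x) n)"
  unfolding open_map_def
proof (intro allI impI)
  fix Op assume Op: "openin (coh_top KIc n) Op"
  define Ot where "Ot = {x \<in> cycles KIc n. hclass KIc n x \<in> Op}"
  have Oto: "openin (cycles_top KIc n) Ot" using Op unfolding coh_top_def quotient_topology_open Ot_def top_cycles_top by simp
  have Osub: "Op \<subseteq> hclass KIc n ` cycles KIc n" using Op unfolding coh_top_def quotient_topology_open top_cycles_top by simp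
  have cm: "coh_map K (\<lambda>n x. x) n (hclass KIc n a) = hclass K n a" if a: "a \<in> cycles KIc n" for a
  proof -
    have "(\<lambda>p. 0) \<in> boundaries KIc n" unfolding Bd_KIc using S_0 D_zero by (metis image_eqI)
    then have "a \<in> hclass KIc n a" unfolding hclass_def using a by simp
    then have "(SOME x. x \<in> hclass KIc n a) \<in> hclass KIc n a" by (rule someI[where P="\<lambda>x. x \<in> hclass KIc n a"])
    then have "(\<lambda>p. (SOME x. x \<in> hclass KIc n a) p - a p) \<in> boundaries K n"
      unfolding hclass_def using BdI_sub by auto
    then show ?thesis unfolding coh_map_def by (rule hK_eq)
  qed
  have Im: "coh_map K (\<lambda>n x. x) n ` Op = hclass K n ` Ot"
  proof
    show "coh_map K (\<lambda>n x. x) n ` Op \<subseteq> hclass K n ` Ot"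
      using Osub cm unfolding Ot_def by fastforce
    show "hclass K n ` Ot \<subseteq> coh_map K (\<lambda>n x. x) n ` Op"
      using cm unfolding Ot_def by (force intro!: image_eqI)
  qed
  define F where "F = (\<lambda>(a, b). cadd K n ((\<lambda>n x. x) n a) (cneg K n (cdiff K (n - 1) b)))"
  have F: "F (a,b) = (\<lambda>p. a p + - cdiff K (n - 1) b p)" for a b by (simp add: F_def)
  have "openin (prod_topology (cycles_top KIc n) (ctop K (n - 1))) (Ot \<times> topspace (ctop K (n - 1)))"
    using Oto by (simp add: openin_prod_Times_iff)
  then have Fo: "openin (cycles_top K n) (F ` (Ot \<times> topspace (ctop K (n - 1))))"
    using qo unfolding quasi_open_def open_map_def F_def by blast
  have pre: "{z \<in> cycles K n. hclass K n z \<in> hclass K n ` Ot} = F ` (Ot \<times> topspace (ctop K (n - 1)))"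
  proof
    show "{z \<in> cycles K n. hclass K n z \<in> hclass K n ` Ot} \<subseteq> F ` (Ot \<times> topspace (ctop K (n - 1)))"
    proof
      fix z assume "z \<in> {z \<in> cycles K n. hclass K n z \<in> hclass K n ` Ot}"
      then obtain a where z: "z \<in> cycles K n" "a \<in> Ot" "hclass K n z = hclass K n a" by auto
      then have "z \<in> hclass K n a" using hK_self by metis
      then have "(\<lambda>p. z p - a p) \<in> boundaries K n" by (rule hK_mem)
      then obtain b where b: "b \<in> topspace (ctop K (n - 1))" "(\<lambda>p. z p - a p) = cdiff K (n - 1) b"
        unfolding Bd_K by auto
      have "F (a, (\<lambda>p. - b p)) = z"
        unfolding F D_neg[OF b(1)] using fun_cong[OF b(2)] by (auto simp: algebra_simps)
      then show "z \<in> F ` (Ot \<times> topspace (ctop K (n - 1)))"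
        using z(2) topK_neg'[OF b(1)] by force
    qed
    show "F ` (Ot \<times> topspace (ctop K (n - 1))) \<subseteq> {z \<in> cycles K n. hclass K n z \<in> hclass K n ` Ot}"
    proof (clarify)
      fix a b assume ab: "a \<in> Ot" "b \<in> topspace (ctop K (n - 1))"
      have ac: "a \<in> cycles K n" using ab cyc_sub Ot_def by auto
      then have "F (a, b) \<in> cycles K n"
        using F_cycle[OF _ _ ab(2)] unfolding F cycles_K by auto
      moreover have "hclass K n (F (a,b)) = hclass K n a"
        apply (rule hK_eq) unfolding F Bd_K using ab(2) D_neg[OF ab(2)]
        by (auto intro!: image_eqI[of _ _ "\<lambda>p. - b p"] topK_neg')
      ultimately show "F (a, b) \<in> cycles K n \<and> hclass K n (F (a, b)) \<in> hclass K n ` Ot"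
        using ab by auto
    qed
  qed
  show "openin (coh_top K n) (coh_map K (\<lambda>n x. x) n ` Op)"
  proof -
    have s1: "hclass K n ` Ot \<subseteq> hclass K n ` cycles K n"
      by (rule image_mono) (use cyc_sub in \<open>auto simp: Ot_def\<close>)
    show ?thesis unfolding Im coh_top_def quotient_topology_open top_cycles_top
      using s1 pre Fo by simp
  qed
qed

end

context DC begin

abbreviation "L \<equiv> quotient_complex K S"

lemma qc_def': "qcoset K S n x = {y \<in> topspace (ctop K n). (\<lambda>p. y p - x p) \<in> S n}"
  by (simp add: qcoset_def)

lemma qc_self: "x \<in> topspace (ctop K n) \<Longrightarrow> x \<in> qcoset K S n x"
  unfolding qc_def' using S_0 by simp

lemma qc_eq:
  assumes "(\<lambda>p. x p - y p) \<in> S n"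
  shows "qcoset K S n x = qcoset K S n y"
proof -
  have "(\<lambda>p. z p - x p) \<in> S n \<longleftrightarrow> (\<lambda>p. z p - y p) \<in> S n" for z
  proof
    assume h: "(\<lambda>p. z p - x p) \<in> S n"
    show "(\<lambda>p. z p - y p) \<in> S n" using S_add[OF h assms] by simp
  next
    assume h: "(\<lambda>p. z p - y p) \<in> S n"
    show "(\<lambda>p. z p - x p) \<in> S n" using S_diff[OF h assms] by simp
  qed
  then show ?thesis unfolding qc_def' by blast
qed

lemma qc_eqD:
  assumes "x \<in> topspace (ctop K n)" "qcoset K S n x = qcoset K S n y"
  shows "(\<lambda>p. x p - y p) \<in> S n"
proof -
  have "x \<in> qcoset K S n y" using qc_self[OF assms(1)] assms(2) by simp
  then show ?thesis unfolding qc_def' by simp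
qed

lemma qc_some:
  assumes "x \<in> topspace (ctop K n)"
  shows "(SOME z. z \<in> qcoset K S n x) \<in> topspace (ctop K n)"
    "(\<lambda>p. (SOME z. z \<in> qcoset K S n x) p - x p) \<in> S n"
proof -
  have "(SOME z. z \<in> qcoset K S n x) \<in> qcoset K S n x"
    using qc_self[OF assms] by (rule someI[where P="\<lambda>z. z \<in> qcoset K S n x"])
  then show "(SOME z. z \<in> qcoset K S n x) \<in> topspace (ctop K n)"
    "(\<lambda>p. (SOME z. z \<in> qcoset K S n x) p - x p) \<in> S n" unfolding qc_def' by auto
qed

lemma L_simps: "ctop L n = quotient_topology (ctop K n) (qcoset K S n)"
  "czero L n = qcoset K S n (\<lambda>p. 0)"
  by (simp_all add: quotient_complex_def)

lemma L_add:
  assumes x: "x \<in> topspace (ctop K n)" and y: "y \<in> topspace (ctop K n)"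
  shows "cadd L n (qcoset K S n x) (qcoset K S n y) = qcoset K S n (\<lambda>p. x p + y p)"
proof -
  define s1 where "s1 = (SOME z. z \<in> qcoset K S n x)"
  define s2 where "s2 = (SOME z. z \<in> qcoset K S n y)"
  have "(\<lambda>p. (s1 p - x p) + (s2 p - y p)) \<in> S n"
    using S_add[OF qc_some(2)[OF x] qc_some(2)[OF y]] unfolding s1_def s2_def .
  moreover have "(\<lambda>p. (s1 p - x p) + (s2 p - y p)) = (\<lambda>p. (s1 p + s2 p) - (x p + y p))"
    by (simp add: algebra_simps)
  ultimately have "qcoset K S n (\<lambda>p. s1 p + s2 p) = qcoset K S n (\<lambda>p. x p + y p)"
    by (intro qc_eq) simp
  then show ?thesis unfolding s1_def s2_def by (simp add: quotient_complex_def)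
qed

lemma L_neg:
  assumes x: "x \<in> topspace (ctop K n)"
  shows "cneg L n (qcoset K S n x) = qcoset K S n (\<lambda>p. - x p)"
proof -
  define s1 where "s1 = (SOME z. z \<in> qcoset K S n x)"
  have "(\<lambda>p. - (s1 p - x p)) \<in> S n"
    using S_neg[OF qc_some(2)[OF x]] unfolding s1_def .
  moreover have "(\<lambda>p. - (s1 p - x p)) = (\<lambda>p. (- s1 p) - (- x p))"
    by (simp add: algebra_simps)
  ultimately have "qcoset K S n (\<lambda>p. - s1 p) = qcoset K S n (\<lambda>p. - x p)"
    by (intro qc_eq) simp
  then show ?thesis unfolding s1_def by (simp add: quotient_complex_def)
qed

lemma L_diff:
  assumes x: "x \<in> topspace (ctop K n)"
  shows "cdiff L n (qcoset K S n x) = qcoset K S (n + 1) (cdiff K n x)"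
proof -
  define s1 where "s1 = (SOME z. z \<in> qcoset K S n x)"
  have s1t: "s1 \<in> topspace (ctop K n)" using qc_some(1)[OF x] s1_def by simp
  have "cdiff K n (\<lambda>p. s1 p - x p) \<in> S (n + 1)"
    using S_D[OF qc_some(2)[OF x]] unfolding s1_def .
  then have "(\<lambda>p. cdiff K n s1 p - cdiff K n x p) \<in> S (n + 1)"
    using D_diff[OF s1t x] by simp
  then have "qcoset K S (n + 1) (cdiff K n s1) = qcoset K S (n + 1) (cdiff K n x)"
    by (rule qc_eq)
  then show ?thesis unfolding s1_def by (simp add: quotient_complex_def)
qed

lemma top_L: "topspace (ctop L n) = qcoset K S n ` topspace (ctop K n)"
  by (simp add: L_simps topspace_quotient_topology)

lemma cycL:
  assumes x: "x \<in> topspace (ctop K n)"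
  shows "qcoset K S n x \<in> cycles L n \<longleftrightarrow> cdiff K n x \<in> S (n + 1)"
proof -
  have Dx: "cdiff K n x \<in> topspace (ctop K (n + 1))" by (rule D_in[OF x])
  have "qcoset K S n x \<in> topspace (ctop L n)" using x top_L by simp
  then have "qcoset K S n x \<in> cycles L n \<longleftrightarrow> qcoset K S (n + 1) (cdiff K n x) = qcoset K S (n + 1) (\<lambda>p. 0)"
    unfolding cycles_def L_simps(2) using L_diff[OF x] by simp
  also have "\<dots> \<longleftrightarrow> cdiff K n x \<in> S (n + 1)"
  proof
    assume "qcoset K S (n + 1) (cdiff K n x) = qcoset K S (n + 1) (\<lambda>p. 0)"
    from qc_eqD[OF Dx this] show "cdiff K n x \<in> S (n + 1)" by simp
  next
    assume "cdiff K n x \<in> S (n + 1)"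
    then show "qcoset K S (n + 1) (cdiff K n x) = qcoset K S (n + 1) (\<lambda>p. 0)"
      by (intro qc_eq) simp
  qed
  finally show ?thesis .
qed

lemma part1:
  assumes d''_open: "\<And>p q. open_map (T p q) (subtopology (T p (Suc q)) (ZII T d'' p (Suc q))) (d'' p q)"
  shows "quasi_open zero_complex L (\<lambda>n x. czero L n)"
  unfolding quasi_open_def open_map_def
proof (intro allI impI)
  fix n :: int and G
  assume G: "openin (prod_topology (cycles_top zero_complex n) (ctop L (n - 1))) G"
  define g where "g = (\<lambda>(a::unit, b). cadd L n ((\<lambda>n x. czero L n) n a) (cneg L n (cdiff L (n - 1) b)))"
  define gq where "gq b = qcoset K S n (\<lambda>p. - cdiff K (n - 1) b p)" for b
  have g: "g (a, qcoset K S (n - 1) b) = gq b" if b: "b \<in> topspace (ctop K (n - 1))" for a b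
  proof -
    have Db: "cdiff K (n - 1) b \<in> topspace (ctop K n)" using D_in[OF b] by simp
    have "cdiff L (n - 1) (qcoset K S (n - 1) b) = qcoset K S n (cdiff K (n - 1) b)"
      using L_diff[OF b] by simp
    then show ?thesis unfolding g_def gq_def using L_neg[OF Db] L_add[OF topK_0 topK_neg'[OF Db]]
      by (simp add: L_simps)
  qed
  have gqc: "gq b \<in> cycles L n" if b: "b \<in> topspace (ctop K (n - 1))" for b
  proof -
    have Db: "cdiff K (n - 1) b \<in> topspace (ctop K n)" using D_in[OF b] by simp
    have "cdiff K n (\<lambda>p. - cdiff K (n - 1) b p) = (\<lambda>p. 0)"
      using D_neg[OF Db] DD[OF b] by simp
    then show ?thesis unfolding gq_def using cycL[OF topK_neg'[OF Db]] S_0 by simp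
  qed
  show "openin (cycles_top L n) ((\<lambda>(a, b). cadd L n ((\<lambda>n x. czero L n) n a) (cneg L n (cdiff L (n - 1) b))) ` G)"
    unfolding g_def[symmetric]
  proof (subst openin_subopen, intro ballI)
    fix w assume "w \<in> g ` G"
    then obtain a c where ac: "(a,c) \<in> G" "w = g (a,c)" by auto
    obtain U V where UV: "openin (cycles_top zero_complex n) U" "openin (ctop L (n - 1)) V" "a \<in> U" "c \<in> V" "U \<times> V \<subseteq> G"
      using G[unfolded openin_prod_topology_alt, rule_format, OF ac(1)] by blast
    have Vo: "V \<subseteq> qcoset K S (n - 1) ` topspace (ctop K (n - 1))"
      "openin (ctop K (n - 1)) {y \<in> topspace (ctop K (n - 1)). qcoset K S (n - 1) y \<in> V}"
      using UV(2) unfolding L_simps quotient_topology_open by auto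
    define Vt where "Vt = {y \<in> topspace (ctop K (n - 1)). qcoset K S (n - 1) y \<in> V}"
    obtain b where b: "b \<in> topspace (ctop K (n - 1))" "c = qcoset K S (n - 1) b" using Vo(1) UV(4) by auto
    have bV: "b \<in> Vt" using b UV(4) Vt_def by simp
    have w: "w = gq b" using ac(2) b g by simp
    have wc: "w \<in> cycles L n" using gqc[OF b(1)] w by simp
    have inG: "gq b' \<in> g ` G" if "b' \<in> Vt" for b'
    proof -
      have "(a, qcoset K S (n - 1) b') \<in> G" using that UV(3,5) Vt_def by auto
      moreover have "g (a, qcoset K S (n - 1) b') = gq b'" using that g Vt_def by simp
      ultimately show ?thesis by force
    qed
    have Db: "cdiff K (n - 1) b \<in> topspace (ctop K n)" using D_in[OF b(1)] by simp
    show "\<exists>T'. openin (cycles_top L n) T' \<and> w \<in> T' \<and> T' \<subseteq> g ` G"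
    proof (cases "n < 0")
      case True
      have "cycles L n \<subseteq> {w}"
      proof
        fix c' assume c': "c' \<in> cycles L n"
        then have "c' \<in> topspace (ctop L n)" unfolding cycles_def by simp
        then obtain z where z: "z \<in> topspace (ctop K n)" "c' = qcoset K S n z" using top_L by auto
        have "z = (\<lambda>p. 0)" using z(1) topK_neg[OF True] by simp
        moreover have "(\<lambda>p. - cdiff K (n - 1) b p) = (\<lambda>p. 0)"
          using topK_neg[OF True] topK_neg'[OF Db] by blast
        ultimately show "c' \<in> {w}" using z(2) w gq_def by simp
      qed
      then have "cycles L n = {w}" using wc by auto
      moreover have "openin (cycles_top L n) (cycles L n)"
        by (metis openin_topspace top_cycles_top)
      ultimately show ?thesis using inG[OF bV] w by (intro exI[of _ "cycles L n"]) auto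
    next
      case False
      then obtain m where n: "n = int m" by (metis nonneg_int_cases not_less)
      have Vto: "openin (ctop K (int m - 1)) Vt" using Vo(2) Vt_def n by simp
      obtain B where B: "openin (ctop K (int m)) B" "(\<lambda>p. 0) \<in> B"
        "\<And>x. x \<in> B \<Longrightarrow> (\<forall>p\<le>m. cdiff K (int m) x p = 0) \<Longrightarrow>
        (\<exists>u\<in>topspace (ctop K (int m - 1)). (\<lambda>p. b p - u p) \<in> Vt
           \<and> (\<lambda>p. x p - cdiff K (int m - 1) u p) \<in> S (int m)
           \<and> (\<lambda>p. 0 + (x p - cdiff K (int m - 1) u p)) \<in> topspace (ctop K (int m)))"
        using core[OF d''_open Vto bV openin_topspace topK_0] by blast
      define Wt where "Wt = {z \<in> topspace (ctop K n). (\<lambda>p. z p + cdiff K (n - 1) b p) \<in> B}"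
      have Wto: "openin (ctop K n) Wt"
        unfolding Wt_def using openin_continuous_map_preimage[OF topK_shift[OF Db] ] B(1) n by simp
      define Ob where "Ob = qcoset K S n ` Wt"
      have Wtt: "Wt \<subseteq> topspace (ctop K n)" unfolding Wt_def by auto
      have pre: "{y \<in> topspace (ctop K n). qcoset K S n y \<in> Ob} =
          (\<Union>s\<in>S n. {y \<in> topspace (ctop K n). (\<lambda>p. y p + - s p) \<in> Wt})"
      proof
        show "{y \<in> topspace (ctop K n). qcoset K S n y \<in> Ob} \<subseteq> (\<Union>s\<in>S n. {y \<in> topspace (ctop K n). (\<lambda>p. y p + - s p) \<in> Wt})"
        proof clarify
          fix y assume y: "y \<in> topspace (ctop K n)" "qcoset K S n y \<in> Ob"
          then obtain z where z: "z \<in> Wt" "qcoset K S n y = qcoset K S n z" unfolding Ob_def by auto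
          have s: "(\<lambda>p. y p - z p) \<in> S n" by (rule qc_eqD[OF y(1) z(2)])
          have "(\<lambda>p. y p + - (y p - z p)) = z" by simp
          then show "y \<in> (\<Union>s\<in>S n. {y \<in> topspace (ctop K n). (\<lambda>p. y p + - s p) \<in> Wt})"
            using s y(1) z(1) by (intro UN_I[OF s]) auto
        qed
        show "(\<Union>s\<in>S n. {y \<in> topspace (ctop K n). (\<lambda>p. y p + - s p) \<in> Wt}) \<subseteq> {y \<in> topspace (ctop K n). qcoset K S n y \<in> Ob}"
        proof clarify
          fix s y assume s: "s \<in> S n" and y: "y \<in> topspace (ctop K n)" "(\<lambda>p. y p + - s p) \<in> Wt"
          have "(\<lambda>p. y p - (y p + - s p)) = s" by simp
          then have "qcoset K S n y = qcoset K S n (\<lambda>p. y p + - s p)" using s by (intro qc_eq) simp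
          then show "qcoset K S n y \<in> Ob" unfolding Ob_def using y(2) by blast
        qed
      qed
      have "openin (ctop K n) (\<Union>s\<in>S n. {y \<in> topspace (ctop K n). (\<lambda>p. y p + - s p) \<in> Wt})"
      proof (rule openin_Union, clarify)
        fix s assume s: "s \<in> S n"
        have st: "(\<lambda>p. - s p) \<in> topspace (ctop K n)" using topK_neg' s S_sub by blast
        show "openin (ctop K n) {y \<in> topspace (ctop K n). (\<lambda>p. y p + - s p) \<in> Wt}"
          using openin_continuous_map_preimage[OF topK_shift[OF st] Wto] by simp
      qed
      then have Obo: "openin (ctop L n) Ob"
        unfolding L_simps quotient_topology_open pre[symmetric] using Wtt Ob_def by auto
      define T' where "T' = Ob \<inter> cycles L n"
      have T'o: "openin (cycles_top L n) T'"
        unfolding cycles_top_def openin_subtopology T'_def using Obo by blast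
      have "(\<lambda>p. - cdiff K (n - 1) b p) \<in> Wt" unfolding Wt_def using topK_neg'[OF Db] B(2) by simp
      then have wT: "w \<in> T'" unfolding T'_def Ob_def using w gq_def wc by blast
      have "T' \<subseteq> g ` G"
      proof
        fix w' assume "w' \<in> T'"
        then obtain z where z: "z \<in> Wt" "w' = qcoset K S n z" "w' \<in> cycles L n" unfolding T'_def Ob_def by auto
        have zt: "z \<in> topspace (ctop K n)" using z(1) Wt_def by simp
        have DzS: "cdiff K n z \<in> S (n + 1)" using cycL[OF zt] z(2,3) by simp
        define x where "x = (\<lambda>p. z p + cdiff K (n - 1) b p)"
        have xB: "x \<in> B" using z(1) unfolding Wt_def x_def n by simp
        have "cdiff K n x = (\<lambda>p. cdiff K n z p + cdiff K n (cdiff K (n - 1) b) p)"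
          unfolding x_def by (rule D_add[OF zt Db])
        also have "\<dots> = cdiff K n z" using DD[OF b(1)] by simp
        finally have Dx: "cdiff K n x = cdiff K n z" .
        have "\<forall>p\<le>m. cdiff K (int m) x p = 0"
          using DzS Dx n unfolding KI_set_def by auto
        then obtain u where u: "u \<in> topspace (ctop K (int m - 1))" "(\<lambda>p. b p - u p) \<in> Vt"
           "(\<lambda>p. x p - cdiff K (int m - 1) u p) \<in> S (int m)"
          using B(3)[OF xB] by blast
        have Dut: "cdiff K (n - 1) u \<in> topspace (ctop K n)" using D_in[OF u(1)] n by simp
        have "cdiff K (n - 1) (\<lambda>p. b p - u p) = (\<lambda>p. cdiff K (n - 1) b p - cdiff K (n - 1) u p)"
          using D_diff[OF b(1)] u(1) n by simp
        then have "(\<lambda>p. z p - (- cdiff K (n - 1) (\<lambda>p. b p - u p) p)) = (\<lambda>p. x p - cdiff K (int m - 1) u p)"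
          unfolding x_def n by (simp add: algebra_simps)
        then have "qcoset K S n z = gq (\<lambda>p. b p - u p)" unfolding gq_def using u(3) n
          by (intro qc_eq) simp
        then show "w' \<in> g ` G" using inG[OF u(2)] z(2) by simp
      qed
      then show ?thesis using T'o wT by blast
    qed
  qed
qed

end

theorem proposition2p4:
  fixes T :: "nat \<Rightarrow> nat \<Rightarrow> 'a::ab_group_add topology"
    and d' d'' :: "nat \<Rightarrow> nat \<Rightarrow> 'a \<Rightarrow> 'a"
  assumes dc: "double_complex T d' d''"
    and d''_open: "\<And>p q. open_map (T p q) (subtopology (T p (Suc q)) (ZII T d'' p (Suc q))) (d'' p q)"
  shows "quasi_open zero_complex
           (quotient_complex (total_complex T d' d'') (KI_set T d' d''))
           (\<lambda>n x. czero (quotient_complex (total_complex T d' d'') (KI_set T d' d'')) n)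
       \<and> quasi_open (KI_complex T d' d'') (total_complex T d' d'') (\<lambda>n x. x)
       \<and> (\<forall>n\<ge>0.
           open_map (coh_top (KI_complex T d' d'') n) (coh_top (total_complex T d' d'') n)
             (coh_map (total_complex T d' d'') (\<lambda>n x. x) n))"
  proof -
  interpret DC T d' d'' by (rule DC.intro[OF dc])
  have p2: "quasi_open (KI_complex T d' d'') (total_complex T d' d'') (\<lambda>n x. x)"
    by (rule part2[OF d''_open])
  show ?thesis using part1[OF d''_open] p2 part3[OF p2] by blast
qed

end
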